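(* Let $G=(V,w,m)$ be a finite connected weighted graph satisfying $CD(K,\infty)$ for some $K>0$, let $D:=\operatorname{Deg}_{\max}$, let $x_0\in V$ and $f_0:=d(x_0,\cdot)$, and let $P_t=e^{t\Delta}$. The following are equivalent: (1) there is $y_0\in V$ with $d(x_0,y_0)=\frac{2D}{K}$; (2) $\operatorname{Deg}(x_0)=D$ and $\Gamma P_tf_0=e^{-2Kt}P_t\Gamma f_0$ for all $t\ge0$; (3) $\operatorname{Deg}(x_0)=D$ and $\Gamma_2 f_0=K\Gamma f_0$; (4) $\operatorname{Deg}(x_0)=D$ and $f_0=\varphi+C$ for a constant $C$ and a function $\varphi$ with $-\Delta\varphi=K\varphi$; (5) $G$ has the hypercube shell structure $HSS\left(\frac{2D}K,\frac K2,x_0\right)$.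
   Context: A weighted graph is $G=(V,w,m)$ with $V$ countable, $w:V\times V\to[0,\infty)$ symmetric with $w(x,x)=0$, $m:V\to(0,\infty)$; $x\sim y$ iff $w(x,y)>0$. Laplacian $\Delta f(x)=\frac1{m(x)}\sum_y w(x,y)(f(y)-f(x))$; $\operatorname{Deg}(x)=\frac1{m(x)}\sum_yw(x,y)$, $\operatorname{Deg}_{\max}=\max_x\operatorname{Deg}(x)$. $d$ is the combinatorial graph distance. $2\Gamma(f,g)=\Delta(fg)-f\Delta g-g\Delta f$, $2\Gamma_2(f,g)=\Delta\Gamma(f,g)-\Gamma(f,\Delta g)-\Gamma(g,\Delta f)$, $\Gamma f=\Gamma(f,f)$, $\Gamma_2f=\Gamma_2(f,f)$; $CD(K,\infty)$ means $\Gamma_2f(x)\ge K\Gamma f(x)$ for all $f$ and $x$. $d_-^{x_0}(z)=\sum_{y\sim z,\ d(y,x_0)<d(z,x_0)}\frac{w(y,z)}{m(z)}$. Hypercube shell structure $HSS(N,W,x_0)$ ($N,W>0$): (i) $\operatorname{Deg}(x)=NW$ for all $x\in V$; (ii) $G$ is bipartite; (iii) $d_-^{x_0}(x)=W\,d(x,x_0)$ for all $x\in V$. *)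

theory Defs
  imports Complex_Main
begin

text \<open>Finite weighted graphs: the vertex set is the finite type 'a (V = UNIV),
  w is the edge weight, m the vertex measure.\<close>

definition weighted_graph :: "('a::finite \<Rightarrow> 'a \<Rightarrow> real) \<Rightarrow> ('a \<Rightarrow> real) \<Rightarrow> bool" where
  "weighted_graph w m \<longleftrightarrow>
     (\<forall>x y. w x y = w y x) \<and> (\<forall>x y. 0 \<le> w x y) \<and> (\<forall>x. w x x = 0) \<and> (\<forall>x. 0 < m x)"

definition adj :: "('a \<Rightarrow> 'a \<Rightarrow> real) \<Rightarrow> 'a \<Rightarrow> 'a \<Rightarrow> bool" where
  "adj w x y \<longleftrightarrow> w x y > 0"

definition connected_graph :: "('a \<Rightarrow> 'a \<Rightarrow> real) \<Rightarrow> bool" where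
  "connected_graph w \<longleftrightarrow> (\<forall>x y. \<exists>n. (adj w ^^ n) x y)"

definition gdist :: "('a \<Rightarrow> 'a \<Rightarrow> real) \<Rightarrow> 'a \<Rightarrow> 'a \<Rightarrow> nat" where
  "gdist w x y = (LEAST n. (adj w ^^ n) x y)"

definition lap :: "('a::finite \<Rightarrow> 'a \<Rightarrow> real) \<Rightarrow> ('a \<Rightarrow> real) \<Rightarrow> ('a \<Rightarrow> real) \<Rightarrow> 'a \<Rightarrow> real" where
  "lap w m f x = (1 / m x) * (\<Sum>y\<in>UNIV. w x y * (f y - f x))"

definition Deg :: "('a::finite \<Rightarrow> 'a \<Rightarrow> real) \<Rightarrow> ('a \<Rightarrow> real) \<Rightarrow> 'a \<Rightarrow> real" where
  "Deg w m x = (1 / m x) * (\<Sum>y\<in>UNIV. w x y)"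

definition Deg_max :: "('a::finite \<Rightarrow> 'a \<Rightarrow> real) \<Rightarrow> ('a \<Rightarrow> real) \<Rightarrow> real" where
  "Deg_max w m = Max (range (Deg w m))"

definition Gam :: "('a::finite \<Rightarrow> 'a \<Rightarrow> real) \<Rightarrow> ('a \<Rightarrow> real) \<Rightarrow> ('a \<Rightarrow> real) \<Rightarrow> ('a \<Rightarrow> real) \<Rightarrow> 'a \<Rightarrow> real" where
  "Gam w m f g x = (lap w m (\<lambda>z. f z * g z) x - f x * lap w m g x - g x * lap w m f x) / 2"

definition Gam2 :: "('a::finite \<Rightarrow> 'a \<Rightarrow> real) \<Rightarrow> ('a \<Rightarrow> real) \<Rightarrow> ('a \<Rightarrow> real) \<Rightarrow> ('a \<Rightarrow> real) \<Rightarrow> 'a \<Rightarrow> real" where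
  "Gam2 w m f g x = (lap w m (Gam w m f g) x - Gam w m f (lap w m g) x - Gam w m g (lap w m f) x) / 2"

definition CD_inf :: "('a::finite \<Rightarrow> 'a \<Rightarrow> real) \<Rightarrow> ('a \<Rightarrow> real) \<Rightarrow> real \<Rightarrow> bool" where
  "CD_inf w m K \<longleftrightarrow> (\<forall>f x. Gam2 w m f f x \<ge> K * Gam w m f f x)"

definition heat :: "('a::finite \<Rightarrow> 'a \<Rightarrow> real) \<Rightarrow> ('a \<Rightarrow> real) \<Rightarrow> real \<Rightarrow> ('a \<Rightarrow> real) \<Rightarrow> 'a \<Rightarrow> real" where
  "heat w m t f x = (\<Sum>n. t ^ n / fact n * (lap w m ^^ n) f x)"

definition dminus :: "('a::finite \<Rightarrow> 'a \<Rightarrow> real) \<Rightarrow> ('a \<Rightarrow> real) \<Rightarrow> 'a \<Rightarrow> 'a \<Rightarrow> real" where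
  "dminus w m x0 z = (\<Sum>y\<in>{y. adj w y z \<and> gdist w y x0 < gdist w z x0}. w y z / m z)"

definition bipartite :: "('a \<Rightarrow> 'a \<Rightarrow> real) \<Rightarrow> bool" where
  "bipartite w \<longleftrightarrow> (\<exists>A. \<forall>x y. adj w x y \<longrightarrow> (x \<in> A \<longleftrightarrow> y \<notin> A))"

definition HSS :: "('a::finite \<Rightarrow> 'a \<Rightarrow> real) \<Rightarrow> ('a \<Rightarrow> real) \<Rightarrow> real \<Rightarrow> real \<Rightarrow> 'a \<Rightarrow> bool" where
  "HSS w m N W x0 \<longleftrightarrow>
     (\<forall>x. Deg w m x = N * W) \<and> bipartite w \<and>
     (\<forall>x. dminus w m x0 x = W * real (gdist w x x0))"

end

theory Submission
  imports Defs
begin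


locale wg =
  fixes w :: "'a::finite \<Rightarrow> 'a \<Rightarrow> real" and m :: "'a \<Rightarrow> real"
  assumes wg: "weighted_graph w m"
begin

lemma w_sym: "w x y = w y x" using wg unfolding weighted_graph_def by auto
lemma w_nn: "0 \<le> w x y" using wg unfolding weighted_graph_def by auto
lemma w_refl: "w x x = 0" using wg unfolding weighted_graph_def by auto
lemma m_pos: "0 < m x" using wg unfolding weighted_graph_def by auto

lemma Deg_nn: "0 \<le> Deg w m x"
  unfolding Deg_def using m_pos w_nn by (simp add: sum_nonneg less_imp_le)

lemma Deg_le: "Deg w m x \<le> Deg_max w m"
  unfolding Deg_max_def by (rule Max_ge) auto

lemma Dmax_nn: "0 \<le> Deg_max w m"
  using Deg_nn Deg_le order_trans by blast

lemma adj_sym: "adj w x y = adj w y x" unfolding adj_def using w_sym by simp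

lemma lap_alt: "lap w m f x = (\<Sum>y\<in>UNIV. w x y * (f y - f x)) / m x"
  by (simp add: lap_def)

lemma Deg_alt: "Deg w m x = (\<Sum>y\<in>UNIV. w x y) / m x"
  by (simp add: Deg_def)

lemma Gam_alt: "Gam w m f g x = (\<Sum>y\<in>UNIV. w x y * (f y - f x) * (g y - g x)) / (2 * m x)"
proof -
  have "lap w m (\<lambda>z. f z * g z) x - f x * lap w m g x - g x * lap w m f x
      = (\<Sum>y\<in>UNIV. w x y * (f y * g y - f x * g x) - f x * (w x y * (g y - g x)) - g x * (w x y * (f y - f x))) / m x"
    unfolding lap_alt by (simp add: sum_subtractf sum_distrib_left diff_divide_distrib)
  also have "\<dots> = (\<Sum>y\<in>UNIV. w x y * (f y - f x) * (g y - g x)) / m x"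
    by (rule arg_cong[where f="\<lambda>s. s / m x"], rule sum.cong) (auto simp: algebra_simps)
  finally show ?thesis unfolding Gam_def by simp
qed

lemma lap_add: "lap w m (\<lambda>z. f z + g z) x = lap w m f x + lap w m g x"
  unfolding lap_alt add_divide_distrib[symmetric] sum.distrib[symmetric]
  by (rule arg_cong[where f="\<lambda>s. s / m x"], rule sum.cong) (auto simp: algebra_simps)

lemma lap_diff: "lap w m (\<lambda>z. f z - g z) x = lap w m f x - lap w m g x"
  unfolding lap_alt diff_divide_distrib[symmetric] sum_subtractf[symmetric]
  by (rule arg_cong[where f="\<lambda>s. s / m x"], rule sum.cong) (auto simp: algebra_simps)

lemma lap_cmult: "lap w m (\<lambda>z. c * f z) x = c * lap w m f x"
  by (simp add: lap_alt sum_distrib_left algebra_simps)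

lemma lap_const: "lap w m (\<lambda>z. c) x = 0"
  by (simp add: lap_alt)

lemma lap_add_const: "lap w m (\<lambda>z. f z + c) x = lap w m f x"
  by (simp add: lap_alt)

lemma lap_sum: "lap w m (\<lambda>z. \<Sum>i\<in>S. F i z) x = (\<Sum>i\<in>S. lap w m (F i) x)"
proof (cases "finite S")
  case True then show ?thesis
    by (induction S rule: finite_induct) (simp_all add: lap_const lap_add)
next
  case False then show ?thesis by (simp add: lap_const)
qed

lemma Gam_sym: "Gam w m f g x = Gam w m g f x"
  by (simp add: Gam_alt algebra_simps)

lemma Gam_add: "Gam w m (\<lambda>z. f z + g z) h x = Gam w m f h x + Gam w m g h x"
  unfolding Gam_alt add_divide_distrib[symmetric] sum.distrib[symmetric]
  by (rule arg_cong[where f="\<lambda>s. s / (2 * m x)"], rule sum.cong) (auto simp: algebra_simps)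

lemma Gam_cmult: "Gam w m (\<lambda>z. c * f z) h x = c * Gam w m f h x"
  by (simp add: Gam_alt sum_distrib_left algebra_simps)

lemma Gam_add_const: "Gam w m (\<lambda>z. f z + c) h x = Gam w m f h x"
  by (simp add: Gam_alt)

lemma Gam_const: "Gam w m (\<lambda>z. c) h x = 0"
  by (simp add: Gam_alt)

lemma Gam_nn: "0 \<le> Gam w m f f x"
  unfolding Gam_alt using m_pos w_nn
  by (intro divide_nonneg_pos sum_nonneg) (auto simp: mult.assoc)

lemma lap_cong: "(\<And>z. f z = g z) \<Longrightarrow> lap w m f x = lap w m g x"
  by (metis ext)

lemma m_lap: "m x * lap w m g x = (\<Sum>y\<in>UNIV. w x y * (g y - g x))"
  using m_pos[of x] by (simp add: lap_alt)

lemma sum_m_lap: "(\<Sum>x\<in>UNIV. m x * lap w m g x) = 0"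
proof -
  have "(\<Sum>x\<in>UNIV. m x * lap w m g x) = (\<Sum>x\<in>UNIV. \<Sum>y\<in>UNIV. w x y * (g y - g x))"
    by (simp add: m_lap)
  also have "\<dots> = (\<Sum>x\<in>UNIV. \<Sum>y\<in>UNIV. w x y * g y) - (\<Sum>x\<in>UNIV. \<Sum>y\<in>UNIV. w x y * g x)"
    by (simp add: sum_subtractf algebra_simps)
  also have "(\<Sum>x\<in>UNIV. \<Sum>y\<in>UNIV. w x y * g y) = (\<Sum>x\<in>UNIV. \<Sum>y\<in>UNIV. w x y * g x)"
    by (subst sum.swap) (rule sum.cong[OF refl], rule sum.cong[OF refl], simp add: w_sym)
  finally show ?thesis by simp
qed

lemma sum_m_Gam: "(\<Sum>x\<in>UNIV. m x * Gam w m f g x) = - (\<Sum>x\<in>UNIV. m x * f x * lap w m g x)"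
proof -
  have A: "(\<Sum>x\<in>UNIV. m x * Gam w m f g x) = (\<Sum>x\<in>UNIV. \<Sum>y\<in>UNIV. w x y * (f y - f x) * (g y - g x)) / 2"
    using m_pos by (simp add: Gam_alt sum_divide_distrib[symmetric] less_imp_neq[symmetric])
  have B: "(\<Sum>x\<in>UNIV. m x * f x * lap w m g x) = (\<Sum>x\<in>UNIV. \<Sum>y\<in>UNIV. w x y * f x * (g y - g x))"
    by (rule sum.cong[OF refl]) (simp add: mult.assoc m_lap sum_distrib_left algebra_simps)
  have C: "(\<Sum>x\<in>UNIV. \<Sum>y\<in>UNIV. w x y * f y * (g y - g x)) = - (\<Sum>x\<in>UNIV. \<Sum>y\<in>UNIV. w x y * f x * (g y - g x))"
    by (subst sum.swap) (simp add: sum_negf[symmetric], rule sum.cong[OF refl], rule sum.cong[OF refl], simp add: w_sym algebra_simps)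
  have "(\<Sum>x\<in>UNIV. \<Sum>y\<in>UNIV. w x y * (f y - f x) * (g y - g x))
      = (\<Sum>x\<in>UNIV. \<Sum>y\<in>UNIV. w x y * f y * (g y - g x)) - (\<Sum>x\<in>UNIV. \<Sum>y\<in>UNIV. w x y * f x * (g y - g x))"
    unfolding sum_subtractf[symmetric] by (rule sum.cong[OF refl], rule sum.cong[OF refl]) (simp add: algebra_simps)
  then show ?thesis using A B C by simp
qed

lemma self_adj: "(\<Sum>x\<in>UNIV. m x * f x * lap w m g x) = (\<Sum>x\<in>UNIV. m x * g x * lap w m f x)"
  using sum_m_Gam[of f g] sum_m_Gam[of g f] Gam_sym[of f g] by simp


lemma Gam_lin1: "Gam w m (\<lambda>z. a * f z + b * g z) h x = a * Gam w m f h x + b * Gam w m g h x"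
  by (simp add: Gam_add Gam_cmult)

lemma Gam_lin2: "Gam w m h (\<lambda>z. a * f z + b * g z) x = a * Gam w m h f x + b * Gam w m h g x"
  by (simp add: Gam_sym[of h] Gam_lin1)

lemma Gam_add2: "Gam w m h (\<lambda>z. f z + g z) x = Gam w m h f x + Gam w m h g x"
  by (simp add: Gam_sym[of h] Gam_add)

lemma Gam_cmult2: "Gam w m h (\<lambda>z. c * f z) x = c * Gam w m h f x"
  by (simp add: Gam_sym[of h] Gam_cmult)

lemma Gam_fun_sym: "Gam w m f g = Gam w m g f"
  by (rule ext) (rule Gam_sym)

lemma Gam2_sym: "Gam2 w m f g x = Gam2 w m g f x"
  unfolding Gam2_def by (simp add: Gam_fun_sym)

lemma Gam2_expand:
  "Gam2 w m (\<lambda>z. f z + e * h z) (\<lambda>z. f z + e * h z) x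
   = Gam2 w m f f x + 2 * e * Gam2 w m f h x + e^2 * Gam2 w m h h x"
proof -
  define F where "F = (\<lambda>z. f z + e * h z)"
  have G: "Gam w m F F = (\<lambda>y. Gam w m f f y + (2*e) * Gam w m f h y + e^2 * Gam w m h h y)"
    by (rule ext) (simp add: F_def Gam_add Gam_cmult Gam_add2 Gam_cmult2 Gam_sym[of h f] power2_eq_square algebra_simps)
  have LF: "lap w m F = (\<lambda>y. lap w m f y + e * lap w m h y)"
    by (rule ext) (simp add: F_def lap_add lap_cmult)
  have 1: "lap w m (Gam w m F F) x = lap w m (Gam w m f f) x + (2*e) * lap w m (Gam w m f h) x + e^2 * lap w m (Gam w m h h) x"
    unfolding G by (simp add: lap_add lap_cmult)
  have 2: "Gam w m F (lap w m F) x = Gam w m f (lap w m f) x + e * Gam w m f (lap w m h) x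
        + e * Gam w m h (lap w m f) x + e^2 * Gam w m h (lap w m h) x"
    unfolding LF by (simp add: F_def Gam_add Gam_cmult Gam_add2 Gam_cmult2 power2_eq_square algebra_simps)
  show ?thesis unfolding F_def[symmetric] Gam2_def 1 2 by (simp add: field_simps)
qed

lemma quad_nonneg_lin0:
  fixes a b :: real
  assumes "\<forall>e. 0 \<le> a * e + b * e^2"
  shows "a = 0"
proof (rule ccontr)
  assume a0: "a \<noteq> 0"
  define c where "c = \<bar>b\<bar> + 1"
  have p: "c > 0" "c \<noteq> 0" by (auto simp: c_def)
  define e where "e = - a / c"
  have "a * e + b * e^2 \<le> a * e + \<bar>b\<bar> * e^2"
    by (simp add: mult_right_mono)
  also have "a * e + \<bar>b\<bar> * e^2 = (a^2 * (\<bar>b\<bar> - c)) / c^2"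
    using p by (simp add: e_def field_simps power2_eq_square)
  also have "\<dots> = - (a^2) / c^2" by (simp add: c_def)
  also have "\<dots> < 0" using a0 p by simp
  finally show False using assms by (meson not_le)
qed

lemma CD_variation:
  assumes cd: "CD_inf w m K" and eq: "Gam2 w m f f x = K * Gam w m f f x"
  shows "Gam2 w m f h x = K * Gam w m f h x"
proof -
  have "\<forall>e. 0 \<le> (2 * (Gam2 w m f h x - K * Gam w m f h x)) * e + (Gam2 w m h h x - K * Gam w m h h x) * e^2"
  proof
    fix e
    have c: "Gam2 w m (\<lambda>z. f z + e * h z) (\<lambda>z. f z + e * h z) x \<ge> K * Gam w m (\<lambda>z. f z + e * h z) (\<lambda>z. f z + e * h z) x"
      using cd unfolding CD_inf_def by blast
    have "Gam w m (\<lambda>z. f z + e * h z) (\<lambda>z. f z + e * h z) x = Gam w m f f x + 2*e*Gam w m f h x + e^2 * Gam w m h h x"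
      by (simp add: Gam_add Gam_cmult Gam_add2 Gam_cmult2 Gam_sym[of h f] power2_eq_square algebra_simps)
    then show "0 \<le> (2 * (Gam2 w m f h x - K * Gam w m f h x)) * e + (Gam2 w m h h x - K * Gam w m h h x) * e^2"
      using c eq unfolding Gam2_expand by (simp add: algebra_simps)
  qed
  from quad_nonneg_lin0[OF this] show ?thesis by simp
qed

lemma lap_lap_K:
  assumes cd: "CD_inf w m K" and eq: "\<forall>x. Gam2 w m f f x = K * Gam w m f f x"
  shows "lap w m (\<lambda>z. lap w m f z + K * f z) x = 0"
proof -
  have key: "(\<Sum>x\<in>UNIV. m x * h x * (lap w m (lap w m f) x + K * lap w m f x)) = 0" for h
  proof -
    have v: "\<forall>x. Gam2 w m f h x = K * Gam w m f h x" using CD_variation[OF cd] eq by blast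
    have "(\<Sum>x\<in>UNIV. m x * (2 * Gam2 w m f h x)) = (\<Sum>x\<in>UNIV. m x * lap w m (Gam w m f h) x)
        - (\<Sum>x\<in>UNIV. m x * Gam w m (lap w m h) f x) - (\<Sum>x\<in>UNIV. m x * Gam w m (lap w m f) h x)"
    proof -
      have pt: "\<And>x. m x * (2 * Gam2 w m f h x) = m x * lap w m (Gam w m f h) x - m x * Gam w m (lap w m h) f x - m x * Gam w m (lap w m f) h x"
        by (simp add: Gam2_def Gam_sym[of f "lap w m h"] Gam_sym[of h "lap w m f"] field_simps)
      show ?thesis by (simp add: pt sum_subtractf)
    qed
    also have "\<dots> = 2 * (\<Sum>x\<in>UNIV. m x * lap w m f x * lap w m h x)"
      unfolding sum_m_lap sum_m_Gam by (simp add: algebra_simps)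
    also have "\<dots> = 2 * (\<Sum>x\<in>UNIV. m x * h x * lap w m (lap w m f) x)"
      using self_adj[of "lap w m f" h] by simp
    finally have 1: "(\<Sum>x\<in>UNIV. m x * (2 * Gam2 w m f h x)) = 2 * (\<Sum>x\<in>UNIV. m x * h x * lap w m (lap w m f) x)" .
    have 2: "(\<Sum>x\<in>UNIV. m x * (2 * Gam2 w m f h x)) = 2 * K * (\<Sum>x\<in>UNIV. m x * Gam w m h f x)"
      using v by (simp add: Gam_sym[of f] sum_distrib_left algebra_simps)
    have 3: "(\<Sum>x\<in>UNIV. m x * Gam w m h f x) = - (\<Sum>x\<in>UNIV. m x * h x * lap w m f x)"
      by (rule sum_m_Gam)
    from 1 2 3 have "(\<Sum>x\<in>UNIV. m x * h x * lap w m (lap w m f) x) + K * (\<Sum>x\<in>UNIV. m x * h x * lap w m f x) = 0"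
      by simp
    then show ?thesis by (simp add: sum_distrib_left algebra_simps sum.distrib)
  qed
  have "(\<Sum>y\<in>UNIV. m y * (if y = x then 1 else 0) * (lap w m (lap w m f) y + K * lap w m f y)) = 0"
    using key[of "\<lambda>y. if y = x then 1 else 0"] by simp
  moreover have "(\<Sum>y\<in>UNIV. m y * (if y = x then 1 else 0) * (lap w m (lap w m f) y + K * lap w m f y))
     = (\<Sum>y\<in>UNIV. if y = x then m y * (lap w m (lap w m f) y + K * lap w m f y) else 0)"
    by (rule sum.cong) auto
  ultimately have "m x * (lap w m (lap w m f) x + K * lap w m f x) = 0"
    by simp
  then show ?thesis using m_pos[of x] by (simp add: lap_add lap_cmult)
qed

lemma sum_zero_nonneg_lap:
  assumes "\<forall>x. 0 \<le> lap w m g x" shows "lap w m g x = 0"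
proof -
  have "(\<Sum>x\<in>UNIV. m x * lap w m g x) = 0" by (rule sum_m_lap)
  moreover have "\<forall>x\<in>UNIV. 0 \<le> m x * lap w m g x" using assms m_pos by (simp add: less_imp_le)
  ultimately have "m x * lap w m g x = 0" using sum_nonneg_eq_0_iff[of UNIV "\<lambda>x. m x * lap w m g x"] by simp
  then show ?thesis using m_pos[of x] by simp
qed


end

context wg begin
lemma adj_neq: "adj w x y \<Longrightarrow> x \<noteq> y"
  using w_refl unfolding adj_def by auto

lemma relpowp_sym: "(adj w ^^ n) x y \<Longrightarrow> (adj w ^^ n) y x"
proof (induction n arbitrary: y)
  case 0 then show ?case by simp
next
  case (Suc n)
  from Suc.prems obtain z where "(adj w ^^ n) x z" "adj w z y" by (rule relpowp_Suc_E)
  then show ?case using Suc.IH adj_sym by (metis relpowp_Suc_I2)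
qed

lemma gdist_le: "(adj w ^^ n) x y \<Longrightarrow> gdist w x y \<le> n"
  unfolding gdist_def by (rule Least_le)

lemma gdist_self: "gdist w x x = 0"
  using gdist_le[of 0 x x] by simp

end

locale cg = wg +
  assumes conn: "connected_graph w"
begin

lemma gdist_path: "(adj w ^^ gdist w x y) x y"
  unfolding gdist_def using conn unfolding connected_graph_def by (metis LeastI)

lemma gdist_sym: "gdist w x y = gdist w y x"
proof (rule antisym)
  show "gdist w x y \<le> gdist w y x" using gdist_le[OF relpowp_sym[OF gdist_path[of y x]]] .
  show "gdist w y x \<le> gdist w x y" using gdist_le[OF relpowp_sym[OF gdist_path[of x y]]] .
qed

lemma gdist_0: "gdist w x y = 0 \<longleftrightarrow> x = y"
  using gdist_path[of x y] gdist_self by auto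

lemma gdist_adj: "adj w x y \<Longrightarrow> gdist w z y \<le> gdist w z x + 1"
  using gdist_le[OF relpowp_Suc_I[OF gdist_path[of z x]]] by simp

lemma gdist_adj_abs: assumes that: "adj w x y" shows "\<bar>real (gdist w z y) - real (gdist w z x)\<bar> \<le> 1"
proof -
  have "adj w y x" using adj_sym that by simp
  then show ?thesis using gdist_adj[of x y z] gdist_adj[of y x z] that by linarith
qed

lemma gdist_adj1: assumes that: "adj w x y" shows "gdist w x y = 1"
proof -
  have "(adj w ^^ 1) x y" using that by (simp only: relpowp_1)
  then have "gdist w x y \<le> 1" by (rule gdist_le)
  moreover have "gdist w x y \<noteq> 0" using gdist_0[of x y] adj_neq[OF that] by simp
  ultimately show ?thesis by simp
qed

lemma harmonic_const:
  assumes h: "\<forall>x. lap w m g x = 0"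
  shows "g x = g y"
proof -
  define M where "M = Max (range g)"
  have "M \<in> range g" unfolding M_def by (rule Max_in) auto
  then obtain x1 where x1: "g x1 = M" by auto
  have le: "g z \<le> M" for z unfolding M_def by (rule Max_ge) auto
  have "\<forall>y. (adj w ^^ n) x1 y \<longrightarrow> g y = M" for n
  proof (induction n)
    case 0 then show ?case using x1 by simp
  next
    case (Suc n)
    show ?case
    proof (intro allI impI)
      fix y assume "(adj w ^^ Suc n) x1 y"
      then obtain z where z: "(adj w ^^ n) x1 z" "adj w z y" by (rule relpowp_Suc_E)
      have gz: "g z = M" using Suc z by blast
      have s0: "(\<Sum>u\<in>UNIV. w z u * (g u - g z)) = 0"
        using h[rule_format, of z] m_lap[of z g] by simp
      have "(\<Sum>u\<in>UNIV. w z u * (M - g u)) = - (\<Sum>u\<in>UNIV. w z u * (g u - g z))"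
        unfolding sum_negf[symmetric] gz by (rule sum.cong) (auto simp: algebra_simps)
      then have "(\<Sum>u\<in>UNIV. w z u * (M - g u)) = 0" using s0 by simp
      moreover have "\<forall>u\<in>UNIV. 0 \<le> w z u * (M - g u)" using w_nn le by simp
      ultimately have "w z y * (M - g y) = 0" using sum_nonneg_eq_0_iff[of UNIV "\<lambda>u. w z u * (M - g u)"] by simp
      then show "g y = M" using z(2) unfolding adj_def by simp
    qed
  qed
  then have "g z = M" for z using gdist_path[of x1 z] by blast
  then show ?thesis by simp
qed


lemma parity:
  assumes A: "\<forall>x y. adj w x y \<longrightarrow> (x \<in> A \<longleftrightarrow> y \<notin> A)"
  shows "(adj w ^^ n) x y \<Longrightarrow> ((x \<in> A) = (y \<in> A)) = even n"
proof (induction n arbitrary: y)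
  case 0 then show ?case by simp
next
  case (Suc n)
  from Suc.prems obtain z where "(adj w ^^ n) x z" "adj w z y" by (rule relpowp_Suc_E)
  then show ?case using Suc.IH A by auto
qed

end

locale cgx = cg w m for w :: "'a::finite \<Rightarrow> 'a \<Rightarrow> real" and m +
  fixes x0 :: 'a
begin

abbreviation "f0 \<equiv> (\<lambda>x. real (gdist w x0 x))"

lemma f0_x0: "f0 x0 = 0" by (simp add: gdist_self)

lemma f0_adj: "adj w x y \<Longrightarrow> \<bar>f0 y - f0 x\<bar> \<le> 1"
  by (rule gdist_adj_abs)

lemma w_pos_adj: "w x y \<noteq> 0 \<Longrightarrow> adj w x y"
  using w_nn[of x y] unfolding adj_def by simp

lemma lap_f0_x0: "lap w m f0 x0 = Deg w m x0"
proof -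
  have "(\<Sum>y\<in>UNIV. w x0 y * (f0 y - f0 x0)) = (\<Sum>y\<in>UNIV. w x0 y)"
  proof (rule sum.cong)
    fix y
    show "w x0 y * (f0 y - f0 x0) = w x0 y"
    proof (cases "w x0 y = 0")
      case False then have "adj w x0 y" by (rule w_pos_adj)
      then show ?thesis using gdist_adj1 f0_x0 by simp
    qed simp
  qed simp
  then show ?thesis by (simp add: lap_alt Deg_alt)
qed

lemma Gam_f0_x0: "Gam w m f0 f0 x0 = Deg w m x0 / 2"
proof -
  have "(\<Sum>y\<in>UNIV. w x0 y * (f0 y - f0 x0) * (f0 y - f0 x0)) = (\<Sum>y\<in>UNIV. w x0 y)"
  proof (rule sum.cong)
    fix y
    show "w x0 y * (f0 y - f0 x0) * (f0 y - f0 x0) = w x0 y"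
    proof (cases "w x0 y = 0")
      case False then have "adj w x0 y" by (rule w_pos_adj)
      then show ?thesis using gdist_adj1 f0_x0 by simp
    qed simp
  qed simp
  then show ?thesis by (simp add: Gam_alt Deg_alt)
qed

lemma Deg_minus_Gam: "m x * Deg w m x - 2 * m x * Gam w m f0 f0 x = (\<Sum>y\<in>UNIV. w x y * (1 - (f0 y - f0 x)^2))"
proof -
  have 1: "m x * Deg w m x = (\<Sum>y\<in>UNIV. w x y)" using m_pos[of x] by (simp add: Deg_alt)
  have 2: "2 * m x * Gam w m f0 f0 x = (\<Sum>y\<in>UNIV. w x y * (f0 y - f0 x) * (f0 y - f0 x))" using m_pos[of x] by (simp add: Gam_alt)
  show ?thesis unfolding 1 2 sum_subtractf[symmetric]
    by (rule sum.cong) (auto simp: algebra_simps power2_eq_square)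
qed

lemma term_nn: "0 \<le> w x y * (1 - (f0 y - f0 x)^2)"
proof (cases "w x y = 0")
  case False then have "adj w x y" by (rule w_pos_adj)
  then have "\<bar>f0 y - f0 x\<bar> \<le> 1" by (rule f0_adj)
  then have "(f0 y - f0 x)^2 \<le> 1" by (simp add: abs_square_le_1)
  then show ?thesis using w_nn[of x y] by simp
qed simp

lemma Gam_f0_le: "Gam w m f0 f0 x \<le> Deg w m x / 2"
proof -
  have "0 \<le> m x * Deg w m x - 2 * m x * Gam w m f0 f0 x"
    unfolding Deg_minus_Gam by (rule sum_nonneg) (simp add: term_nn)
  then have "0 \<le> m x * (Deg w m x - 2 * Gam w m f0 f0 x)" by (simp add: algebra_simps)
  then show ?thesis using m_pos[of x] by (simp add: zero_le_mult_iff)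
qed

lemma Gam_f0_le_D: "Gam w m f0 f0 x \<le> Deg_max w m / 2"
  using Gam_f0_le[of x] Deg_le[of x] by simp

definition "pm1 x \<longleftrightarrow> (\<forall>y. adj w x y \<longrightarrow> f0 y \<noteq> f0 x)"

lemma pm1_D: assumes "pm1 x" "adj w x y" shows "f0 y = f0 x + 1 \<or> f0 y = f0 x - 1"
proof -
  have "gdist w x0 y \<noteq> gdist w x0 x" using assms unfolding pm1_def by auto
  moreover have "\<bar>f0 y - f0 x\<bar> \<le> 1" using f0_adj[OF assms(2)] .
  ultimately show ?thesis by linarith
qed

lemma Gam_pm1: assumes "pm1 x" shows "Gam w m f0 f0 x = Deg w m x / 2"
proof -
  have "(\<Sum>y\<in>UNIV. w x y * (1 - (f0 y - f0 x)^2)) = 0"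
  proof (rule sum.neutral, rule ballI)
    fix y show "w x y * (1 - (f0 y - f0 x)^2) = 0"
    proof (cases "w x y = 0")
      case False then have "adj w x y" by (rule w_pos_adj)
      from pm1_D[OF assms this] show ?thesis by auto
    qed simp
  qed
  then have "m x * (Deg w m x - 2 * Gam w m f0 f0 x) = 0" using Deg_minus_Gam[of x] by (simp add: algebra_simps)
  then show ?thesis using m_pos[of x] by simp
qed

lemma dminus_pm1: assumes "pm1 x" shows "2 * dminus w m x0 x = Deg w m x - lap w m f0 x"
proof -
  have "dminus w m x0 x = (\<Sum>y\<in>UNIV. if adj w y x \<and> gdist w y x0 < gdist w x x0 then w y x / m x else 0)"
    unfolding dminus_def using sum.inter_filter[of UNIV "\<lambda>y. w y x / m x" "\<lambda>y. adj w y x \<and> gdist w y x0 < gdist w x x0"]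
    by simp
  also have "\<dots> = (\<Sum>y\<in>UNIV. (w x y * (1 - (f0 y - f0 x))) / 2) / m x"
    unfolding sum_divide_distrib
  proof (rule sum.cong)
    fix y
    show "(if adj w y x \<and> gdist w y x0 < gdist w x x0 then w y x / m x else 0) = w x y * (1 - (f0 y - f0 x)) / 2 / m x"
    proof (cases "w x y = 0")
      case True then show ?thesis using adj_def w_sym by auto
    next
      case False then have a: "adj w x y" by (rule w_pos_adj)
      then have a': "adj w y x" using adj_sym by simp
      have "gdist w y x0 = gdist w x0 y" "gdist w x x0 = gdist w x0 x" using gdist_sym by auto
      then show ?thesis using pm1_D[OF assms a] a' w_sym[of x y] by auto
    qed
  qed simp
  also have "\<dots> = (Deg w m x - lap w m f0 x) / 2"
  proof -
    have 1: "m x * Deg w m x = (\<Sum>y\<in>UNIV. w x y)" using m_pos[of x] by (simp add: Deg_alt)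
    have "(\<Sum>y\<in>UNIV. (w x y * (1 - (f0 y - f0 x))) / 2) = ((\<Sum>y\<in>UNIV. w x y) - (\<Sum>y\<in>UNIV. w x y * (f0 y - f0 x))) / 2"
      unfolding sum_subtractf[symmetric] sum_divide_distrib[symmetric] by (rule arg_cong[where f="\<lambda>s. s/2"], rule sum.cong) (auto simp: algebra_simps)
    also have "\<dots> = (m x * Deg w m x - m x * lap w m f0 x) / 2" unfolding 1 m_lap by simp
    finally show ?thesis using m_pos[of x] by (simp add: field_simps)
  qed
  finally show ?thesis by simp
qed


lemma lap_f0_ext: "lap w m f0 = (\<lambda>z. (-K) * f0 z + D) \<Longrightarrow> Gam w m f0 (lap w m f0) x = (-K) * Gam w m f0 f0 x"
proof -
  assume a: "lap w m f0 = (\<lambda>z. (-K) * f0 z + D)"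
  have "Gam w m f0 (lap w m f0) x = Gam w m (lap w m f0) f0 x" by (rule Gam_sym)
  also have "\<dots> = Gam w m (\<lambda>z. (-K) * f0 z + D) f0 x" by (simp only: a)
  also have "\<dots> = Gam w m (\<lambda>z. (-K) * f0 z) f0 x" by (rule Gam_add_const)
  also have "\<dots> = (-K) * Gam w m f0 f0 x" by (rule Gam_cmult)
  finally show ?thesis .
qed

lemma s4_imp_s5:
  assumes K: "K > 0" and cd: "CD_inf w m K"
    and dx0: "Deg w m x0 = Deg_max w m"
    and phi: "\<forall>x. f0 x = \<phi> x + C" "\<forall>x. - lap w m \<phi> x = K * \<phi> x"
  shows "HSS w m (2 * Deg_max w m / K) (K / 2) x0"
proof -
  define D where "D = Deg_max w m"
  have f0e: "f0 = (\<lambda>z. \<phi> z + C)" using phi(1) by auto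
  have l1: "lap w m f0 x = - K * (f0 x - C)" for x
  proof -
    have "lap w m f0 x = lap w m \<phi> x" unfolding f0e by (rule lap_add_const)
    moreover have "lap w m \<phi> x = - (K * \<phi> x)" using phi(2)[rule_format, of x] by linarith
    moreover have "\<phi> x = f0 x - C" using phi(1)[rule_format, of x] by linarith
    ultimately show ?thesis by simp
  qed
  have "D = K * C" using l1[of x0] lap_f0_x0 dx0 f0_x0 by (simp add: D_def)
  then have lf: "lap w m f0 x = D - K * f0 x" for x using l1[of x] by (simp add: algebra_simps)
  have lfe: "lap w m f0 = (\<lambda>z. (-K) * f0 z + D)" using lf by (auto simp: algebra_simps)
  have G2: "Gam2 w m f0 f0 x = lap w m (Gam w m f0 f0) x / 2 + K * Gam w m f0 f0 x" for x
    unfolding Gam2_def lap_f0_ext[OF lfe] by (simp add: field_simps)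
  have "0 \<le> lap w m (Gam w m f0 f0) x" for x
  proof -
    have "K * Gam w m f0 f0 x \<le> Gam2 w m f0 f0 x" using cd unfolding CD_inf_def by blast
    then show ?thesis using G2[of x] by linarith
  qed
  then have "lap w m (Gam w m f0 f0) x = 0" for x using sum_zero_nonneg_lap by blast
  then have "Gam w m f0 f0 x = Gam w m f0 f0 x0" for x using harmonic_const by blast
  then have gx: "Gam w m f0 f0 x = D / 2" for x using Gam_f0_x0 dx0 by (simp add: D_def)
  have degx: "Deg w m x = D" and pm: "pm1 x" for x
  proof -
    have s: "m x * Deg w m x - 2 * m x * Gam w m f0 f0 x = (\<Sum>y\<in>UNIV. w x y * (1 - (f0 y - f0 x)^2))"
      by (rule Deg_minus_Gam)
    have nn: "0 \<le> (\<Sum>y\<in>UNIV. w x y * (1 - (f0 y - f0 x)^2))" by (rule sum_nonneg) (simp add: term_nn)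
    have "Deg w m x \<le> D" using Deg_le by (simp add: D_def)
    then have "m x * Deg w m x - 2 * m x * Gam w m f0 f0 x \<le> 0" using gx[of x] m_pos[of x]
      by (simp add: mult_left_mono)
    then have z: "(\<Sum>y\<in>UNIV. w x y * (1 - (f0 y - f0 x)^2)) = 0" using s nn by simp
    then have "m x * Deg w m x - 2 * m x * Gam w m f0 f0 x = 0" using s by simp
    then have "m x * (Deg w m x - D) = 0" using gx[of x] by (simp add: algebra_simps)
    then show "Deg w m x = D" using m_pos[of x] by simp
    have "\<forall>y\<in>UNIV. w x y * (1 - (f0 y - f0 x)^2) = 0"
      using z sum_nonneg_eq_0_iff[of UNIV "\<lambda>y. w x y * (1 - (f0 y - f0 x)^2)"] term_nn by auto
    then show "pm1 x" unfolding pm1_def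
    proof (intro allI impI notI)
      fix y assume a: "\<forall>y\<in>UNIV. w x y * (1 - (f0 y - f0 x)^2) = 0" "adj w x y" "f0 y = f0 x"
      then have z: "f0 y - f0 x = 0" by linarith
      have e: "w x y * (1 - (f0 y - f0 x)^2) = 0" using a(1) by blast
      have "w x y = 0" using e unfolding z by simp
      then show False using a(2) unfolding adj_def by simp
    qed
  qed
  have dm: "dminus w m x0 x = K / 2 * real (gdist w x x0)" for x
    using dminus_pm1[OF pm, of x] degx[of x] lf[of x] gdist_sym[of x x0] by simp
  have bip: "bipartite w"
    unfolding bipartite_def
  proof (intro exI[of _ "{x. even (gdist w x0 x)}"] allI impI)
    fix x y assume a: "adj w x y"
    from pm1_D[OF pm a] have "gdist w x0 y = gdist w x0 x + 1 \<or> gdist w x0 x = gdist w x0 y + 1" by linarith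
    then show "(x \<in> {x. even (gdist w x0 x)}) = (y \<notin> {x. even (gdist w x0 x)})"
      by auto
  qed
  have "Deg w m x = 2 * D / K * (K / 2)" for x using degx[of x] K by simp
  then show ?thesis unfolding HSS_def D_def[symmetric] using bip dm by blast
qed

lemma s5_facts:
  assumes K: "K > 0" and h: "HSS w m (2 * Deg_max w m / K) (K / 2) x0"
  shows "\<forall>x. Deg w m x = Deg_max w m" "\<forall>x. pm1 x"
    "\<forall>x. lap w m f0 x = Deg_max w m - K * f0 x" "\<forall>x. Gam w m f0 f0 x = Deg_max w m / 2"
proof -
  show dg: "\<forall>x. Deg w m x = Deg_max w m" using h K unfolding HSS_def by auto
  obtain A where A: "\<forall>x y. adj w x y \<longrightarrow> (x \<in> A \<longleftrightarrow> y \<notin> A)" using h unfolding HSS_def bipartite_def by auto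
  show pm: "\<forall>x. pm1 x" unfolding pm1_def
  proof (intro allI impI notI)
    fix x y assume a: "adj w x y" and e: "f0 y = f0 x"
    have p1: "((x0 \<in> A) = (x \<in> A)) = even (gdist w x0 x)" by (rule parity[OF A gdist_path])
    have p2: "((x0 \<in> A) = (y \<in> A)) = even (gdist w x0 y)" by (rule parity[OF A gdist_path])
    have "gdist w x0 y = gdist w x0 x" using e by simp
    then show False using p1 p2 A a by auto
  qed
  show "\<forall>x. lap w m f0 x = Deg_max w m - K * f0 x"
  proof
    fix x
    have "2 * dminus w m x0 x = Deg w m x - lap w m f0 x" using pm dminus_pm1 by blast
    moreover have "dminus w m x0 x = K / 2 * f0 x" using h gdist_sym[of x x0] unfolding HSS_def by auto
    ultimately show "lap w m f0 x = Deg_max w m - K * f0 x" using dg by simp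
  qed
  show "\<forall>x. Gam w m f0 f0 x = Deg_max w m / 2" using Gam_pm1 pm dg by simp
qed

lemma s5_imp_s4:
  assumes K: "K > 0" and h: "HSS w m (2 * Deg_max w m / K) (K / 2) x0"
  shows "Deg w m x0 = Deg_max w m \<and> (\<exists>\<phi> C. (\<forall>x. f0 x = \<phi> x + C) \<and> (\<forall>x. - lap w m \<phi> x = K * \<phi> x))"
proof -
  note F = s5_facts[OF K h]
  define C where "C = Deg_max w m / K"
  have "- lap w m (\<lambda>x. f0 x + (- C)) x = K * (f0 x + (- C))" for x
    unfolding lap_add_const using F(3) K by (simp add: C_def algebra_simps)
  moreover have "f0 x = (f0 x + (- C)) + C" for x by simp
  ultimately show ?thesis using F(1) by (intro conjI exI[of _ "\<lambda>x. f0 x + - C"] exI[of _ C]) auto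
qed

lemma s5_imp_s3:
  assumes K: "K > 0" and h: "HSS w m (2 * Deg_max w m / K) (K / 2) x0"
  shows "Deg w m x0 = Deg_max w m \<and> (\<forall>x. Gam2 w m f0 f0 x = K * Gam w m f0 f0 x)"
proof -
  note F = s5_facts[OF K h]
  have lfe: "lap w m f0 = (\<lambda>z. (-K) * f0 z + Deg_max w m)" using F(3) by (auto simp: algebra_simps)
  have ge: "Gam w m f0 f0 = (\<lambda>z. Deg_max w m / 2)" using F(4) by auto
  have "Gam2 w m f0 f0 x = K * Gam w m f0 f0 x" for x
    unfolding Gam2_def lap_f0_ext[OF lfe] by (simp add: ge lap_const)
  then show ?thesis using F(1) by simp
qed

lemma s5_imp_s1:
  assumes K: "K > 0" and h: "HSS w m (2 * Deg_max w m / K) (K / 2) x0"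
  shows "\<exists>y0. f0 y0 = 2 * Deg_max w m / K"
proof -
  note F = s5_facts[OF K h]
  define M where "M = Max (range f0)"
  have "M \<in> range f0" unfolding M_def by (rule Max_in) auto
  then obtain y0 where y0: "f0 y0 = M" by auto
  have le: "f0 z \<le> M" for z unfolding M_def by (rule Max_ge) auto
  have "lap w m f0 y0 = - Deg w m y0"
  proof -
    have "(\<Sum>y\<in>UNIV. w y0 y * (f0 y - f0 y0)) = (\<Sum>y\<in>UNIV. - w y0 y)"
    proof (rule sum.cong)
      fix y show "w y0 y * (f0 y - f0 y0) = - w y0 y"
      proof (cases "w y0 y = 0")
        case False then have a: "adj w y0 y" by (rule w_pos_adj)
        from pm1_D[OF F(2)[rule_format] a] le[of y] y0 show ?thesis by auto
      qed simp
    qed simp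
    then show ?thesis by (simp add: lap_alt Deg_alt sum_negf)
  qed
  then have "2 * dminus w m x0 y0 = 2 * Deg_max w m" using dminus_pm1 F(1,2) by simp
  moreover have "dminus w m x0 y0 = K / 2 * f0 y0" using h gdist_sym[of y0 x0] unfolding HSS_def by auto
  ultimately show ?thesis using K by (intro exI[of _ y0]) (simp add: field_simps)
qed

lemma s3_imp_s4:
  assumes K: "K > 0" and cd: "CD_inf w m K"
    and s3: "Deg w m x0 = Deg_max w m \<and> (\<forall>x. Gam2 w m f0 f0 x = K * Gam w m f0 f0 x)"
  shows "Deg w m x0 = Deg_max w m \<and> (\<exists>\<phi> C. (\<forall>x. f0 x = \<phi> x + C) \<and> (\<forall>x. - lap w m \<phi> x = K * \<phi> x))"
proof -
  have "lap w m (\<lambda>z. lap w m f0 z + K * f0 z) x = 0" for x using lap_lap_K[OF cd] s3 by blast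
  then have c: "lap w m f0 x + K * f0 x = lap w m f0 x0 + K * f0 x0" for x
    using harmonic_const[of "\<lambda>z. lap w m f0 z + K * f0 z"] by blast
  define C where "C = (lap w m f0 x0 + K * f0 x0) / K"
  have "- lap w m (\<lambda>x. f0 x + (- C)) x = K * (f0 x + (- C))" for x
  proof -
    have "lap w m f0 x = lap w m f0 x0 + K * f0 x0 - K * f0 x" using c[of x] by linarith
    moreover have kc: "K * C = lap w m f0 x0 + K * f0 x0" using K by (simp add: C_def)
    ultimately show ?thesis unfolding lap_add_const by (simp add: right_diff_distrib)
  qed
  moreover have "f0 x = (f0 x + (- C)) + C" for x by simp
  ultimately show ?thesis using s3 by (intro conjI exI[of _ "\<lambda>x. f0 x + - C"] exI[of _ C]) auto
qed

end


definition mop :: "('a::finite \<Rightarrow> 'a \<Rightarrow> real) \<Rightarrow> ('a \<Rightarrow> real) \<Rightarrow> 'a \<Rightarrow> real" where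
  "mop a g x = (\<Sum>y\<in>UNIV. a x y * g y)"
definition nrm :: "('a::finite \<Rightarrow> real) \<Rightarrow> real" where
  "nrm g = Max (range (\<lambda>x. \<bar>g x\<bar>))"
definition mb :: "('a::finite \<Rightarrow> 'a \<Rightarrow> real) \<Rightarrow> real" where
  "mb a = (\<Sum>x\<in>UNIV. \<Sum>y\<in>UNIV. \<bar>a x y\<bar>)"
definition ser :: "('a::finite \<Rightarrow> 'a \<Rightarrow> real) \<Rightarrow> real \<Rightarrow> ('a \<Rightarrow> real) \<Rightarrow> 'a \<Rightarrow> real" where
  "ser a t f x = (\<Sum>n. t ^ n / fact n * (mop a ^^ n) f x)"

lemma abs_le_nrm: "\<bar>g x\<bar> \<le> nrm g"
  unfolding nrm_def by (rule Max_ge) auto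

lemma mb_nn: "0 \<le> mb a" unfolding mb_def by (simp add: sum_nonneg)

lemma row_le_mb: "(\<Sum>y\<in>UNIV. \<bar>a x y\<bar>) \<le> mb a"
  unfolding mb_def by (rule member_le_sum[of x UNIV "\<lambda>x. \<Sum>y\<in>UNIV. \<bar>a x y\<bar>"]) (auto simp: sum_nonneg)

lemma mop_bound: "\<bar>mop a g x\<bar> \<le> mb a * nrm g"
proof -
  have "\<bar>mop a g x\<bar> \<le> (\<Sum>y\<in>UNIV. \<bar>a x y\<bar> * \<bar>g y\<bar>)"
    unfolding mop_def by (rule order_trans[OF sum_abs]) (simp add: abs_mult)
  also have "\<dots> \<le> (\<Sum>y\<in>UNIV. \<bar>a x y\<bar> * nrm g)"
    by (rule sum_mono) (simp add: abs_le_nrm mult_left_mono)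
  also have "\<dots> = (\<Sum>y\<in>UNIV. \<bar>a x y\<bar>) * nrm g" by (simp add: sum_distrib_right)
  also have "\<dots> \<le> mb a * nrm g"
    using row_le_mb abs_le_nrm[of g x] by (intro mult_right_mono) auto
  finally show ?thesis .
qed

lemma nrm_le: "(\<And>x. \<bar>g x\<bar> \<le> c) \<Longrightarrow> nrm g \<le> c"
  unfolding nrm_def by (subst Max_le_iff) auto

lemma nrm_nn: "0 \<le> nrm g" using abs_le_nrm[of g] abs_ge_zero order_trans by blast

lemma mopn_bound: "\<bar>(mop a ^^ n) g x\<bar> \<le> mb a ^ n * nrm g"
proof -
  have "nrm ((mop a ^^ n) g) \<le> mb a ^ n * nrm g"
  proof (induction n)
    case 0 then show ?case by simp
  next
    case (Suc n)
    have "nrm ((mop a ^^ Suc n) g) \<le> mb a * nrm ((mop a ^^ n) g)"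
      by (rule nrm_le) (simp add: mop_bound)
    also have "\<dots> \<le> mb a * (mb a ^ n * nrm g)" using Suc mb_nn by (rule mult_left_mono)
    finally show ?case by simp
  qed
  then show ?thesis using abs_le_nrm order_trans by blast
qed

lemma mop_lin: "mop a (\<lambda>z. c * f z + d * g z) x = c * mop a f x + d * mop a g x"
  unfolding mop_def by (simp add: sum.distrib sum_distrib_left algebra_simps)

lemma mopn_lin: "(mop a ^^ n) (\<lambda>z. c * f z + d * g z) = (\<lambda>x. c * (mop a ^^ n) f x + d * (mop a ^^ n) g x)"
proof (induction n)
  case 0 then show ?case by simp
next
  case (Suc n) then show ?case by (simp add: mop_lin)
qed

lemma mopn_zero: "(mop a ^^ n) (\<lambda>z. 0) = (\<lambda>z. 0)"
  by (induction n) (simp_all add: mop_def)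

lemma summable_ser: "summable (\<lambda>n. t ^ n / fact n * (mop a ^^ n) f x)"
proof (rule summable_comparison_test')
  show "summable (\<lambda>n. nrm f * (inverse (fact n) * (mb a * \<bar>t\<bar>) ^ n))"
    by (rule summable_mult) (rule summable_exp)
  fix n :: nat
  have "norm (t ^ n / fact n * (mop a ^^ n) f x) = \<bar>t\<bar> ^ n / fact n * \<bar>(mop a ^^ n) f x\<bar>"
    by (simp add: abs_mult power_abs)
  also have "\<dots> \<le> \<bar>t\<bar> ^ n / fact n * (mb a ^ n * nrm f)"
    by (rule mult_left_mono[OF mopn_bound]) simp
  also have "\<dots> = nrm f * (inverse (fact n) * (mb a * \<bar>t\<bar>) ^ n)"
    by (simp add: power_mult_distrib field_simps)
  finally show "norm (t ^ n / fact n * (mop a ^^ n) f x) \<le> nrm f * (inverse (fact n) * (mb a * \<bar>t\<bar>) ^ n)" .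
qed

lemma ser_alt: "ser a t f x = (\<Sum>n. ((mop a ^^ n) f x / fact n) * t ^ n)"
  unfolding ser_def by (simp add: field_simps)

lemma ser_deriv: "((\<lambda>t. ser a t f x) has_field_derivative ser a t (mop a f) x) (at t)"
proof -
  define c where "c n = (mop a ^^ n) f x / fact n" for n
  have s: "summable (\<lambda>n. c n * y ^ n)" for y
    using summable_ser[of y a f x] by (simp add: c_def field_simps)
  have d: "diffs c n = (mop a ^^ n) (mop a f) x / fact n" for n
  proof -
    have "(mop a ^^ Suc n) f x = (mop a ^^ n) (mop a f) x" by (simp only: funpow_Suc_right o_apply)
    moreover have "fact (Suc n) = real (Suc n) * fact n" by (simp only: fact_Suc of_nat_fact)
    ultimately show ?thesis unfolding diffs_def c_def by (simp del: of_nat_Suc fact_Suc funpow.simps)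
  qed
  have "((\<lambda>t. \<Sum>n. c n * t ^ n) has_field_derivative (\<Sum>n. diffs c n * t ^ n)) (at t)"
    by (rule termdiffs_strong_converges_everywhere[OF s])
  moreover have "(\<lambda>t. ser a t f x) = (\<lambda>t. \<Sum>n. c n * t ^ n)" by (simp add: ser_alt c_def)
  moreover have "ser a t (mop a f) x = (\<Sum>n. diffs c n * t ^ n)" by (simp add: ser_alt d)
  ultimately show ?thesis by simp
qed

lemma ser_mop: "ser a t (mop a f) x = mop a (ser a t f) x"
proof -
  have "mop a (ser a t f) x = (\<Sum>y\<in>UNIV. a x y * ser a t f y)" by (rule mop_def)
  also have "\<dots> = (\<Sum>y\<in>UNIV. \<Sum>n. a x y * (t ^ n / fact n * (mop a ^^ n) f y))"
    unfolding ser_def by (rule sum.cong[OF refl], rule suminf_mult[OF summable_ser, symmetric])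
  also have "\<dots> = (\<Sum>n. \<Sum>y\<in>UNIV. a x y * (t ^ n / fact n * (mop a ^^ n) f y))"
    by (rule suminf_sum[symmetric]) (rule summable_mult[OF summable_ser])
  also have "\<dots> = (\<Sum>n. t ^ n / fact n * (mop a ^^ n) (mop a f) x)"
  proof (rule arg_cong[where f=suminf], rule ext)
    fix n
    have "(mop a ^^ n) (mop a f) = mop a ((mop a ^^ n) f)" by (rule funpow_swap1[symmetric])
    then have "(mop a ^^ n) (mop a f) x = (\<Sum>y\<in>UNIV. a x y * (mop a ^^ n) f y)" by (simp only: mop_def)
    then show "(\<Sum>y\<in>UNIV. a x y * (t ^ n / fact n * (mop a ^^ n) f y)) = t ^ n / fact n * (mop a ^^ n) (mop a f) x"
      by (simp add: sum_distrib_left algebra_simps)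
  qed
  finally show ?thesis unfolding ser_def by simp
qed

lemma ser_0: "ser a 0 f x = f x"
  unfolding ser_alt by (subst powser_zero) simp

lemma ser_lin: "ser a t (\<lambda>z. c * f z + d * g z) x = c * ser a t f x + d * ser a t g x"
proof -
  have "ser a t (\<lambda>z. c * f z + d * g z) x = (\<Sum>n. c * (t ^ n / fact n * (mop a ^^ n) f x) + d * (t ^ n / fact n * (mop a ^^ n) g x))"
    unfolding ser_def mopn_lin by (rule arg_cong[where f=suminf]) (rule ext, simp add: algebra_simps)
  also have "\<dots> = (\<Sum>n. c * (t ^ n / fact n * (mop a ^^ n) f x)) + (\<Sum>n. d * (t ^ n / fact n * (mop a ^^ n) g x))"
    by (rule suminf_add[symmetric]) (intro summable_mult summable_ser)+
  also have "\<dots> = c * ser a t f x + d * ser a t g x"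
    by (simp only: ser_def suminf_mult[OF summable_ser])
  finally show ?thesis .
qed

lemma ser_zero: "ser a t (\<lambda>z. 0) x = 0"
  unfolding ser_def mopn_zero by simp

lemma ser_sum: "ser a t (\<lambda>z. \<Sum>i\<in>S. F i z) x = (\<Sum>i\<in>S. ser a t (F i) x)"
proof (induction S rule: infinite_finite_induct)
  case (infinite S) then show ?case by (simp add: ser_zero)
next
  case empty then show ?case by (simp add: ser_zero)
next
  case (insert i S)
  have "ser a t (\<lambda>z. \<Sum>i\<in>insert i S. F i z) x = ser a t (\<lambda>z. 1 * F i z + 1 * (\<Sum>i\<in>S. F i z)) x"
    using insert by simp
  also have "\<dots> = ser a t (F i) x + ser a t (\<lambda>z. \<Sum>i\<in>S. F i z) x" using ser_lin[of a t 1 "F i" 1 "\<lambda>z. \<Sum>i\<in>S. F i z" x] by simp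
  finally show ?case using insert by simp
qed

lemma ser_kernel: "ser a t g x = (\<Sum>y\<in>UNIV. g y * ser a t (\<lambda>z. if z = y then 1 else 0) x)"
proof -
  have "g = (\<lambda>z. \<Sum>y\<in>UNIV. g y * (if z = y then 1 else 0))" by (simp add: if_distrib cong: if_cong)
  then have "ser a t g x = ser a t (\<lambda>z. \<Sum>y\<in>UNIV. g y * (if z = y then 1 else 0)) x" by simp
  also have "\<dots> = (\<Sum>y\<in>UNIV. ser a t (\<lambda>z. g y * (if z = y then 1 else 0)) x)" by (rule ser_sum)
  also have "\<dots> = (\<Sum>y\<in>UNIV. g y * ser a t (\<lambda>z. if z = y then 1 else 0) x)"
  proof (rule sum.cong[OF refl])
    fix y
    show "ser a t (\<lambda>z. g y * (if z = y then 1 else 0)) x = g y * ser a t (\<lambda>z. if z = y then 1 else 0) x"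
      using ser_lin[of a t "g y" "\<lambda>z. if z = y then 1 else 0" 0 "\<lambda>z. 0" x] by (simp add: ser_zero)
  qed
  finally show ?thesis .
qed


lemma abs_prod_le: fixes p q E :: real shows "p^2 \<le> E \<Longrightarrow> q^2 \<le> E \<Longrightarrow> \<bar>p\<bar> * \<bar>q\<bar> \<le> E"
  by (metis (no_types, lifting) abs_ge_zero abs_mult_self_eq
    dual_order.trans linorder_le_cases mult_left_mono mult_right_mono power2_eq_square)

lemma mop_diff: "mop a (\<lambda>z. f z - g z) x = mop a f x - mop a g x"
  unfolding mop_def by (simp add: sum_subtractf algebra_simps)

lemma energy_bound:
  fixes h :: "'a::finite \<Rightarrow> real"
  shows "(\<Sum>x\<in>UNIV. h x * mop a h x) \<le> mb a * (\<Sum>x\<in>UNIV. (h x)^2)"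
proof -
  define E where "E = (\<Sum>x\<in>UNIV. (h x)^2)"
  have hE: "(h x)^2 \<le> E" for x unfolding E_def
    by (rule member_le_sum[of x UNIV "\<lambda>x. (h x)^2"]) auto
  have "h x * mop a h x \<le> (\<Sum>y\<in>UNIV. \<bar>a x y\<bar> * E)" for x
  proof -
    have "h x * mop a h x = (\<Sum>y\<in>UNIV. a x y * (h x * h y))" unfolding mop_def
      by (simp add: sum_distrib_left algebra_simps)
    also have "\<dots> \<le> (\<Sum>y\<in>UNIV. \<bar>a x y\<bar> * E)"
    proof (rule sum_mono)
      fix y
      have "a x y * (h x * h y) \<le> \<bar>a x y\<bar> * (\<bar>h x\<bar> * \<bar>h y\<bar>)"
        by (metis abs_ge_self abs_mult)
      also have "\<dots> \<le> \<bar>a x y\<bar> * E" by (rule mult_left_mono[OF abs_prod_le[OF hE hE]]) simp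
      finally show "a x y * (h x * h y) \<le> \<bar>a x y\<bar> * E" .
    qed
    finally show ?thesis .
  qed
  then have "(\<Sum>x\<in>UNIV. h x * mop a h x) \<le> (\<Sum>x\<in>UNIV. \<Sum>y\<in>UNIV. \<bar>a x y\<bar> * E)"
    by (rule sum_mono)
  also have "\<dots> = mb a * E" unfolding mb_def by (simp add: sum_distrib_right)
  finally show ?thesis unfolding E_def .
qed

lemma ode_unique:
  fixes u v :: "real \<Rightarrow> 'a::finite \<Rightarrow> real"
  assumes du: "\<And>s x. ((\<lambda>s. u s x) has_field_derivative mop a (u s) x) (at s)"
    and dv: "\<And>s x. ((\<lambda>s. v s x) has_field_derivative mop a (v s) x) (at s)"
    and u0: "\<And>x. u 0 x = v 0 x" and t: "t \<ge> 0"
  shows "u t x = v t x"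
proof -
  define h where "h s x = u s x - v s x" for s x
  have dh: "((\<lambda>s. h s x) has_field_derivative mop a (h s) x) (at s)" for s x
    unfolding h_def mop_diff by (rule DERIV_diff[OF du dv])
  define E where "E s = (\<Sum>x\<in>UNIV. (h s x)^2)" for s
  have dE: "(E has_field_derivative (\<Sum>x\<in>UNIV. 2 * h s x * mop a (h s) x)) (at s)" for s
  proof -
    have d2: "((\<lambda>s. (h s x)^2) has_field_derivative 2 * h s x * mop a (h s) x) (at s)" for x
    proof -
      have "((\<lambda>s. h s x * h s x) has_field_derivative mop a (h s) x * h s x + mop a (h s) x * h s x) (at s)"
        by (rule DERIV_mult[OF dh dh])
      moreover have "(\<lambda>s. (h s x)^2) = (\<lambda>s. h s x * h s x)" by (simp add: power2_eq_square)
      ultimately show ?thesis by (simp add: algebra_simps)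
    qed
    show ?thesis unfolding E_def by (rule DERIV_sum) (rule d2)
  qed
  define c where "c = 2 * mb a"
  define F where "F s = E s * exp (- c * s)" for s
  have dF: "(F has_field_derivative ((\<Sum>x\<in>UNIV. 2 * h s x * mop a (h s) x) * exp (- c * s) - c * E s * exp (- c * s))) (at s)" for s
    unfolding F_def
    by (rule derivative_eq_intros dE refl | simp)+ 
  have "F t \<le> F 0"
  proof (rule DERIV_nonpos_imp_nonincreasing[OF t])
    fix s
    have "(\<Sum>x\<in>UNIV. 2 * h s x * mop a (h s) x) = 2 * (\<Sum>x\<in>UNIV. h s x * mop a (h s) x)"
      by (simp add: sum_distrib_left mult.assoc)
    also have "\<dots> \<le> c * E s" unfolding c_def E_def using energy_bound[of "h s" a] by simp
    finally have "(\<Sum>x\<in>UNIV. 2 * h s x * mop a (h s) x) * exp (- c * s) - c * E s * exp (- c * s) \<le> 0"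
      by (simp add: mult_right_mono algebra_simps)
    then show "\<exists>y. (F has_real_derivative y) (at s) \<and> y \<le> 0" using dF by blast
  qed
  moreover have "F 0 = 0" unfolding F_def E_def h_def using u0 by simp
  moreover have "0 \<le> F t" unfolding F_def E_def by (simp add: sum_nonneg)
  ultimately have "E t = 0" unfolding F_def by simp
  then have "(h t x)^2 = 0" unfolding E_def using sum_nonneg_eq_0_iff[of UNIV "\<lambda>x. (h t x)^2"] by simp
  then show ?thesis unfolding h_def by simp
qed

lemma mopn_nonneg:
  assumes b: "\<And>x y. 0 \<le> b x y" and f: "\<And>z. 0 \<le> f z"
  shows "0 \<le> (mop b ^^ n) f x"
proof (induction n arbitrary: x)
  case 0 then show ?case using f by simp
next
  case (Suc n) then show ?case using b by (simp add: mop_def sum_nonneg)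
qed

lemma ser_nonneg:
  assumes b: "\<And>x y. 0 \<le> b x y" and f: "\<And>z. 0 \<le> f z" and t: "0 \<le> t"
  shows "0 \<le> ser b t f x"
proof -
  have m: "0 \<le> (mop b ^^ n) f x" for n by (rule mopn_nonneg) (use b f in auto)
  show ?thesis unfolding ser_def using m t
    by (intro suminf_nonneg summable_ser) simp
qed


context wg begin

definition aL where "aL x y = w x y / m x - (if x = y then Deg w m x else 0)"
definition aA where "aA x y = aL x y + (if x = y then Deg_max w m else 0)"

lemma lap_mop: "lap w m g x = mop aL g x"
proof -
  have "mop aL g x = (\<Sum>y\<in>UNIV. w x y * g y / m x - (if x = y then Deg w m x * g y else 0))"
    unfolding mop_def aL_def by (rule sum.cong) (auto simp: algebra_simps)
  also have "\<dots> = (\<Sum>y\<in>UNIV. w x y * g y) / m x - Deg w m x * g x"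
    by (simp add: sum_subtractf sum_divide_distrib)
  also have "\<dots> = lap w m g x"
    unfolding lap_alt Deg_alt by (simp add: sum_subtractf diff_divide_distrib sum_distrib_right sum_distrib_left algebra_simps)
  finally show ?thesis by simp
qed

lemma lap_eq: "lap w m = mop aL"
  by (intro ext) (rule lap_mop)

lemma heat_ser: "heat w m t f x = ser aL t f x"
  unfolding heat_def ser_def lap_eq ..

lemma heat_deriv: "((\<lambda>t. heat w m t f x) has_field_derivative heat w m t (lap w m f) x) (at t)"
  unfolding heat_ser lap_eq by (rule ser_deriv)

lemma heat_lap: "heat w m t (lap w m f) x = lap w m (heat w m t f) x"
proof -
  have "heat w m t f = ser aL t f" by (intro ext) (rule heat_ser)
  then show ?thesis unfolding heat_ser lap_eq by (simp add: ser_mop)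
qed

lemma heat_0: "heat w m 0 f x = f x"
  unfolding heat_ser by (rule ser_0)

lemma heat_lin: "heat w m t (\<lambda>z. c * f z + d * g z) x = c * heat w m t f x + d * heat w m t g x"
  unfolding heat_ser by (rule ser_lin)

lemma heat_kernel: "heat w m t g x = (\<Sum>y\<in>UNIV. g y * heat w m t (\<lambda>z. if z = y then 1 else 0) x)"
  unfolding heat_ser by (rule ser_kernel)

lemma mop_aA: "mop aA g x = lap w m g x + Deg_max w m * g x"
proof -
  have "mop aA g x = mop aL g x + (\<Sum>y\<in>UNIV. (if x = y then Deg_max w m else 0) * g y)"
    unfolding mop_def aA_def by (simp add: sum.distrib algebra_simps)
  also have "(\<Sum>y\<in>UNIV. (if x = y then Deg_max w m else 0) * g y) = (\<Sum>y\<in>UNIV. if y = x then Deg_max w m * g y else 0)"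
    by (rule sum.cong) auto
  also have "\<dots> = Deg_max w m * g x" by simp
  finally show ?thesis by (simp add: lap_mop)
qed

lemma aA_nn: "0 \<le> aA x y"
proof (cases "x = y")
  case True then show ?thesis using Deg_le[of x] w_refl[of x] by (simp add: aA_def aL_def)
next
  case False then show ?thesis using w_nn[of x y] m_pos[of x] by (simp add: aA_def aL_def)
qed

lemma heat_exp: assumes t: "t \<ge> 0" shows "heat w m t f x = exp (- Deg_max w m * t) * ser aA t f x"
proof -
  define c where "c = Deg_max w m"
  have "ser aL t f x = (\<lambda>s x. exp (- c * s) * ser aA s f x) t x"
  proof (rule ode_unique[OF _ _ _ t])
    fix s x
    show "((\<lambda>s. ser aL s f x) has_field_derivative mop aL (ser aL s f) x) (at s)"
      using ser_deriv[of aL f x s] by (simp add: ser_mop)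
    have "((\<lambda>s. exp (- c * s) * ser aA s f x) has_field_derivative
        (- c * exp (- c * s)) * ser aA s f x + exp (- c * s) * ser aA s (mop aA f) x) (at s)"
      by (rule derivative_eq_intros ser_deriv refl | simp)+
    moreover have "(- c * exp (- c * s)) * ser aA s f x + exp (- c * s) * ser aA s (mop aA f) x
        = mop aL (\<lambda>x. exp (- c * s) * ser aA s f x) x"
      unfolding ser_mop mop_aA c_def
      using mop_lin[of aL "exp (- c * s)" "ser aA s f" 0 "\<lambda>z. 0" x]
      by (simp add: lap_mop c_def algebra_simps)
    ultimately show "((\<lambda>s. exp (- c * s) * ser aA s f x) has_field_derivative mop aL (\<lambda>x. exp (- c * s) * ser aA s f x) x) (at s)"
      by simp
  next
    fix x show "ser aL 0 f x = exp (- c * 0) * ser aA 0 f x" by (simp add: ser_0)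
  qed
  then show ?thesis by (simp add: heat_ser c_def)
qed

lemma heat_nonneg: assumes "t \<ge> 0" "\<And>z. 0 \<le> f z" shows "0 \<le> heat w m t f x"
  unfolding heat_exp[OF assms(1)] using ser_nonneg[where b=aA and f=f, OF aA_nn assms(2) assms(1)] by simp

lemma heat_const: "heat w m t (\<lambda>z. c) x = c"
proof -
  have "(lap w m ^^ n) (\<lambda>z. c) x = (if n = 0 then c else 0)" for n
  proof (cases n)
    case (Suc k)
    have "(lap w m ^^ Suc k) (\<lambda>z. c) = (lap w m ^^ k) (lap w m (\<lambda>z. c))" by (simp only: funpow_Suc_right o_apply)
    also have "lap w m (\<lambda>z. c) = (\<lambda>z. 0)" by (intro ext) (rule lap_const)
    finally show ?thesis using Suc by (simp add: lap_eq mopn_zero)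
  qed simp
  then have "(\<lambda>n. t ^ n / fact n * (lap w m ^^ n) (\<lambda>z. c) x) = (\<lambda>n. if n = 0 then c else 0)"
    by auto
  moreover have "(\<lambda>n. if n = 0 then c else 0) sums c" using sums_single[of 0 "\<lambda>_. c"] by simp
  ultimately show ?thesis unfolding heat_def by (simp add: sums_iff)
qed

lemma heat_add_const: "heat w m t (\<lambda>z. f z + c) x = heat w m t f x + c"
  using heat_lin[of t 1 f c "\<lambda>z. 1" x] heat_const[of t 1 x] by simp

lemma heat_diff: "heat w m t (\<lambda>z. f z - g z) x = heat w m t f x - heat w m t g x"
  using heat_lin[of t 1 f "-1" g x] by simp

lemma heat_mono: assumes "t \<ge> 0" "\<And>z. f z \<le> g z" shows "heat w m t f x \<le> heat w m t g x"
  using heat_nonneg[of t "\<lambda>z. g z - f z" x] assms heat_diff[of t g f x] by simp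

lemma heat_le_const: assumes "t \<ge> 0" "\<And>z. f z \<le> c" shows "heat w m t f x \<le> c"
  using heat_mono[of t f "\<lambda>z. c" x] assms heat_const by simp

lemma heat_eigen: assumes "\<And>x. lap w m \<phi> x = \<mu> * \<phi> x" shows "heat w m t \<phi> x = exp (\<mu> * t) * \<phi> x"
proof -
  have "(lap w m ^^ n) \<phi> = (\<lambda>x. \<mu> ^ n * \<phi> x)" for n
  proof (induction n)
    case (Suc n)
    have "lap w m (\<lambda>x. \<mu> ^ n * \<phi> x) = (\<lambda>x. \<mu> ^ Suc n * \<phi> x)"
      by (intro ext) (simp add: lap_cmult assms)
    then show ?case using Suc by simp
  qed simp
  then have "(\<lambda>n. t ^ n / fact n * (lap w m ^^ n) \<phi> x) = (\<lambda>n. \<phi> x * ((\<mu> * t) ^ n /\<^sub>R fact n))"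
    by (auto simp: power_mult_distrib field_simps)
  moreover have "(\<lambda>n. \<phi> x * ((\<mu> * t) ^ n /\<^sub>R fact n)) sums (\<phi> x * exp (\<mu> * t))"
    by (rule sums_mult[OF exp_converges])
  ultimately show ?thesis unfolding heat_def by (simp add: sums_iff)
qed

end

context cg begin

lemma mop_aA_ge: assumes "\<And>z. 0 \<le> g z" shows "aA x z * g z \<le> mop aA g x"
  unfolding mop_def using aA_nn assms
  by (intro member_le_sum[of z UNIV "\<lambda>y. aA x y * g y"]) auto

lemma aA_adj: "adj w x z \<Longrightarrow> 0 < aA x z"
  using adj_neq[of x z] m_pos[of x] unfolding adj_def aA_def aL_def by simp

lemma path_pos: "(adj w ^^ n) x y \<Longrightarrow> \<exists>e>0. \<forall>g. (\<forall>z. 0 \<le> g z) \<longrightarrow> e * g y \<le> (mop aA ^^ n) g x"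
proof (induction n arbitrary: x)
  case 0 then show ?case by (intro exI[of _ 1]) auto
next
  case (Suc n)
  from Suc.prems obtain z where z: "adj w x z" "(adj w ^^ n) z y" by (rule relpowp_Suc_E2)
  obtain e where e: "e > 0" "\<forall>g. (\<forall>z. 0 \<le> g z) \<longrightarrow> e * g y \<le> (mop aA ^^ n) g z" using Suc.IH[OF z(2)] by blast
  show ?case
  proof (intro exI[of _ "aA x z * e"] conjI allI impI)
    show "0 < aA x z * e" using aA_adj[OF z(1)] e by simp
    fix g :: "'a \<Rightarrow> real" assume g: "\<forall>z. 0 \<le> g z"
    have "aA x z * e * g y \<le> aA x z * (mop aA ^^ n) g z"
      using e g aA_nn[of x z] by (simp add: mult.assoc mult_left_mono)
    also have "\<dots> \<le> mop aA ((mop aA ^^ n) g) x"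
      by (rule mop_aA_ge) (use mopn_nonneg[where b=aA and f=g, OF aA_nn] g in auto)
    finally show "aA x z * e * g y \<le> (mop aA ^^ Suc n) g x" by simp
  qed
qed

lemma heat_zero_imp:
  assumes t: "t > 0" and h: "\<And>z. 0 \<le> h z" and z: "heat w m t h x = 0"
  shows "h y = 0"
proof -
  have "ser aA t h x = 0" using z heat_exp[of t h x] t by simp
  then have "\<forall>n. t ^ n / fact n * (mop aA ^^ n) h x = 0"
    unfolding ser_def using t mopn_nonneg[where b=aA and f=h, OF aA_nn h]
    by (subst (asm) suminf_eq_zero_iff[OF summable_ser]) auto
  then have "(mop aA ^^ gdist w x y) h x = 0" using t by simp
  moreover obtain e where "e > 0" "e * h y \<le> (mop aA ^^ gdist w x y) h x"
    using path_pos[OF gdist_path[of x y]] h by blast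
  ultimately show ?thesis using h[of y] by (simp add: mult_le_0_iff)
qed

end


context wg begin

lemma Gam_deriv:
  assumes d: "\<And>z. ((\<lambda>s. F s z) has_field_derivative F' z) (at s0)"
  shows "((\<lambda>s. Gam w m (F s) (F s) y) has_field_derivative 2 * Gam w m (F s0) F' y) (at s0)"
proof -
  have t: "((\<lambda>s. w y z * (F s z - F s y) * (F s z - F s y)) has_field_derivative
      w y z * (2 * ((F s0 z - F s0 y) * (F' z - F' y)))) (at s0)" for z
  proof -
    have dd: "((\<lambda>s. F s z - F s y) has_field_derivative F' z - F' y) (at s0)"
      by (rule DERIV_diff[OF d d])
    have "((\<lambda>s. (F s z - F s y) * (F s z - F s y)) has_field_derivative
        (F' z - F' y) * (F s0 z - F s0 y) + (F' z - F' y) * (F s0 z - F s0 y)) (at s0)"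
      by (rule DERIV_mult[OF dd dd])
    from DERIV_cmult[OF this, of "w y z"] show ?thesis by (simp add: algebra_simps)
  qed
  have "((\<lambda>s. (\<Sum>z\<in>UNIV. w y z * (F s z - F s y) * (F s z - F s y)) / (2 * m y)) has_field_derivative
      (\<Sum>z\<in>UNIV. w y z * (2 * ((F s0 z - F s0 y) * (F' z - F' y)))) / (2 * m y)) (at s0)"
    by (rule DERIV_cdivide, rule DERIV_sum, rule t)
  moreover have "(\<Sum>z\<in>UNIV. w y z * (2 * ((F s0 z - F s0 y) * (F' z - F' y)))) / (2 * m y) = 2 * Gam w m (F s0) F' y"
    unfolding Gam_alt by (simp add: sum_distrib_left algebra_simps)
  ultimately show ?thesis unfolding Gam_alt by simp
qed

lemma lap_kernel: "lap w m g z = (\<Sum>y\<in>UNIV. g y * lap w m (\<lambda>u. if u = y then 1 else 0) z)"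
proof -
  have "g = (\<lambda>u. \<Sum>y\<in>UNIV. g y * (if u = y then 1 else 0))" by (simp add: if_distrib cong: if_cong)
  then have "lap w m g z = lap w m (\<lambda>u. \<Sum>y\<in>UNIV. g y * (if u = y then 1 else 0)) z" by simp
  also have "\<dots> = (\<Sum>y\<in>UNIV. lap w m (\<lambda>u. g y * (if u = y then 1 else 0)) z)" by (rule lap_sum)
  also have "\<dots> = (\<Sum>y\<in>UNIV. g y * lap w m (\<lambda>u. if u = y then 1 else 0) z)" by (simp only: lap_cmult)
  finally show ?thesis .
qed

lemma heat_deriv_var:
  assumes d: "\<And>y. ((\<lambda>s. g s y) has_field_derivative g' y) (at s0)"
  shows "((\<lambda>s. heat w m s (g s) x) has_field_derivative heat w m s0 (\<lambda>y. g' y + lap w m (g s0) y) x) (at s0)"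
proof -
  define k where "k s y = heat w m s (\<lambda>z. if z = y then 1 else 0) x" for s y
  define k' where "k' y = heat w m s0 (lap w m (\<lambda>z. if z = y then 1 else 0)) x" for y
  have dk: "((\<lambda>s. k s y) has_field_derivative k' y) (at s0)" for y
    unfolding k_def k'_def by (rule heat_deriv)
  have "((\<lambda>s. \<Sum>y\<in>UNIV. g s y * k s y) has_field_derivative (\<Sum>y\<in>UNIV. g' y * k s0 y + k' y * g s0 y)) (at s0)"
    by (rule DERIV_sum, rule DERIV_mult[OF d dk])
  moreover have "(\<lambda>s. heat w m s (g s) x) = (\<lambda>s. \<Sum>y\<in>UNIV. g s y * k s y)"
    unfolding k_def by (rule ext) (rule heat_kernel)
  moreover have "(\<Sum>y\<in>UNIV. g' y * k s0 y + k' y * g s0 y) = heat w m s0 (\<lambda>y. g' y + lap w m (g s0) y) x"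
  proof -
    have 1: "(\<Sum>y\<in>UNIV. g' y * k s0 y) = heat w m s0 g' x" unfolding k_def by (rule heat_kernel[symmetric])
    have "(\<Sum>y\<in>UNIV. k' y * g s0 y) = (\<Sum>y\<in>UNIV. g s0 y * (\<Sum>z\<in>UNIV. lap w m (\<lambda>u. if u = y then 1 else 0) z * k s0 z))"
      unfolding k'_def k_def by (rule sum.cong[OF refl]) (simp add: heat_kernel[of s0 "lap w m _"])
    also have "\<dots> = (\<Sum>z\<in>UNIV. (\<Sum>y\<in>UNIV. g s0 y * lap w m (\<lambda>u. if u = y then 1 else 0) z) * k s0 z)"
      by (simp add: sum_distrib_left sum_distrib_right algebra_simps) (rule sum.swap)
    also have "\<dots> = (\<Sum>z\<in>UNIV. lap w m (g s0) z * k s0 z)" by (simp add: lap_kernel[symmetric])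
    also have "\<dots> = heat w m s0 (lap w m (g s0)) x" unfolding k_def by (rule heat_kernel[symmetric])
    finally have 2: "(\<Sum>y\<in>UNIV. k' y * g s0 y) = heat w m s0 (lap w m (g s0)) x" .
    show ?thesis using 1 2 heat_lin[of s0 1 g' 1 "lap w m (g s0)" x] by (simp add: sum.distrib)
  qed
  ultimately show ?thesis by simp
qed

lemma heat_back_deriv: "((\<lambda>s. heat w m (t - s) f z) has_field_derivative - lap w m (heat w m (t - s0) f) z) (at s0)"
proof -
  have "((\<lambda>s. heat w m (t - s) f z) has_field_derivative heat w m (t - s0) (lap w m f) z * (- 1)) (at s0)"
    by (rule DERIV_chain2[OF heat_deriv]) (rule derivative_eq_intros refl | simp)+
  then show ?thesis by (simp add: heat_lap)
qed

lemma grad_deriv: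
  "((\<lambda>s. exp (- 2 * K * s) * heat w m s (Gam w m (heat w m (t - s) f) (heat w m (t - s) f)) x) has_field_derivative
     exp (- 2 * K * s0) * heat w m s0 (\<lambda>y. 2 * (Gam2 w m (heat w m (t - s0) f) (heat w m (t - s0) f) y
        - K * Gam w m (heat w m (t - s0) f) (heat w m (t - s0) f) y)) x) (at s0)"
proof -
  define u where "u s = heat w m (t - s) f" for s
  have du: "((\<lambda>s. u s z) has_field_derivative - lap w m (u s0) z) (at s0)" for z
    unfolding u_def by (rule heat_back_deriv)
  have dg: "((\<lambda>s. Gam w m (u s) (u s) y) has_field_derivative 2 * Gam w m (u s0) (\<lambda>z. - lap w m (u s0) z) y) (at s0)" for y
    by (rule Gam_deriv[OF du])
  have dh: "((\<lambda>s. heat w m s (Gam w m (u s) (u s)) x) has_field_derivative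
      heat w m s0 (\<lambda>y. 2 * Gam w m (u s0) (\<lambda>z. - lap w m (u s0) z) y + lap w m (Gam w m (u s0) (u s0)) y) x) (at s0)"
    by (rule heat_deriv_var[OF dg])
  have eq: "2 * Gam w m (u s0) (\<lambda>z. - lap w m (u s0) z) y + lap w m (Gam w m (u s0) (u s0)) y = 2 * Gam2 w m (u s0) (u s0) y" for y
    using Gam_cmult2[of "u s0" "-1" "lap w m (u s0)" y] unfolding Gam2_def by simp
  have de: "((\<lambda>s. exp (- 2 * K * s)) has_field_derivative (- 2 * K) * exp (- 2 * K * s0)) (at s0)"
    by (rule derivative_eq_intros refl | simp)+
  have fe: "(\<lambda>y. 2 * Gam w m (u s0) (\<lambda>z. - lap w m (u s0) z) y + lap w m (Gam w m (u s0) (u s0)) y) = (\<lambda>y. 2 * Gam2 w m (u s0) (u s0) y)"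
    by (rule ext) (rule eq)
  have "((\<lambda>s. exp (- 2 * K * s) * heat w m s (Gam w m (u s) (u s)) x) has_field_derivative
     (- 2 * K) * exp (- 2 * K * s0) * heat w m s0 (Gam w m (u s0) (u s0)) x + heat w m s0 (\<lambda>y. 2 * Gam2 w m (u s0) (u s0) y) x * exp (- 2 * K * s0)) (at s0)"
    using DERIV_mult[OF de dh] unfolding fe .
  moreover have "(- 2 * K) * exp (- 2 * K * s0) * heat w m s0 (Gam w m (u s0) (u s0)) x + heat w m s0 (\<lambda>y. 2 * Gam2 w m (u s0) (u s0) y) x * exp (- 2 * K * s0)
     = exp (- 2 * K * s0) * heat w m s0 (\<lambda>y. 2 * (Gam2 w m (u s0) (u s0) y - K * Gam w m (u s0) (u s0) y)) x"
  proof -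
    have h1: "heat w m s0 (\<lambda>y. 2 * (Gam2 w m (u s0) (u s0) y - K * Gam w m (u s0) (u s0) y)) x
        = 2 * heat w m s0 (Gam2 w m (u s0) (u s0)) x + (- 2 * K) * heat w m s0 (Gam w m (u s0) (u s0)) x"
      using heat_lin[of s0 2 "Gam2 w m (u s0) (u s0)" "- 2 * K" "Gam w m (u s0) (u s0)" x]
      by (simp add: algebra_simps)
    have h2: "heat w m s0 (\<lambda>y. 2 * Gam2 w m (u s0) (u s0) y) x = 2 * heat w m s0 (Gam2 w m (u s0) (u s0)) x"
      using heat_lin[of s0 2 "Gam2 w m (u s0) (u s0)" 0 "Gam w m (u s0) (u s0)" x] by simp
    show ?thesis unfolding h1 h2 by (simp add: algebra_simps)
  qed
  ultimately show ?thesis unfolding u_def by simp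
qed

end


lemma weighted_CS:
  fixes p d :: "'b \<Rightarrow> real" and S :: "'b set"
  assumes fin: "finite S" and p: "\<And>y. 0 \<le> p y"
  shows "(\<Sum>y\<in>S. p y * d y)^2 \<le> (\<Sum>y\<in>S. p y) * (\<Sum>y\<in>S. p y * (d y)^2)"
proof (cases "(\<Sum>y\<in>S. p y) = 0")
  case True
  then have "\<forall>y\<in>S. p y = 0" using sum_nonneg_eq_0_iff[OF fin] p by blast
  then show ?thesis by simp
next
  case False
  define A where "A = (\<Sum>y\<in>S. p y)"
  define T where "T = (\<Sum>y\<in>S. p y * d y)"
  define Q where "Q = (\<Sum>y\<in>S. p y * (d y)^2)"
  have A: "A > 0" using False sum_nonneg[of S p] p unfolding A_def by force
  define c where "c = T / A"
  have "0 \<le> (\<Sum>y\<in>S. p y * (d y - c)^2)" using p by (intro sum_nonneg) simp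
  also have "(\<Sum>y\<in>S. p y * (d y - c)^2) = (\<Sum>y\<in>S. p y * (d y)^2 - 2 * c * (p y * d y) + c^2 * p y)"
    by (rule sum.cong) (auto simp: power2_eq_square algebra_simps)
  also have "\<dots> = Q - 2 * c * T + c^2 * A"
    unfolding Q_def T_def A_def by (simp add: sum.distrib sum_subtractf sum_distrib_left)
  also have "\<dots> = Q - T^2 / A" using A by (simp add: c_def power2_eq_square field_simps)
  finally have "T^2 / A \<le> Q" by simp
  then have "T^2 \<le> A * Q" using A by (simp add: field_simps)
  then show ?thesis unfolding A_def T_def Q_def .
qed

context wg begin

lemma lap_CS: "(lap w m g x)^2 \<le> 2 * Deg w m x * Gam w m g g x"
proof -
  have "(\<Sum>y\<in>UNIV. w x y * (g y - g x))^2 \<le> (\<Sum>y\<in>UNIV. w x y) * (\<Sum>y\<in>UNIV. w x y * (g y - g x)^2)"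
    by (rule weighted_CS) (auto simp: w_nn)
  moreover have "(lap w m g x)^2 = (\<Sum>y\<in>UNIV. w x y * (g y - g x))^2 / (m x)^2"
    by (simp add: lap_alt power_divide)
  moreover have "2 * Deg w m x * Gam w m g g x = (\<Sum>y\<in>UNIV. w x y) * (\<Sum>y\<in>UNIV. w x y * (g y - g x)^2) / (m x)^2"
    using m_pos[of x] unfolding Deg_alt Gam_alt by (simp add: power2_eq_square mult.assoc)
  ultimately show ?thesis using m_pos[of x] by (simp add: divide_right_mono)
qed

lemma heat_isCont: "isCont (\<lambda>r. heat w m r f z) r0"
  by (rule DERIV_isCont[OF heat_deriv])

lemma lap_cont: "(\<And>z. isCont (\<lambda>r. F r z) r0) \<Longrightarrow> isCont (\<lambda>r. lap w m (F r) y) r0"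
  unfolding lap_alt by (intro continuous_intros) (auto simp: m_pos less_imp_neq[symmetric])

lemma Gam_cont: "(\<And>z. isCont (\<lambda>r. F r z) r0) \<Longrightarrow> (\<And>z. isCont (\<lambda>r. G r z) r0) \<Longrightarrow> isCont (\<lambda>r. Gam w m (F r) (G r) y) r0"
  unfolding Gam_alt by (intro continuous_intros) (auto simp: m_pos less_imp_neq[symmetric])

lemma Gam2_cont: assumes "\<And>z. isCont (\<lambda>r. F r z) r0" shows "isCont (\<lambda>r. Gam2 w m (F r) (F r) y) r0"
proof -
  have 1: "isCont (\<lambda>r. lap w m (Gam w m (F r) (F r)) y) r0"
    by (rule lap_cont, rule Gam_cont) (rule assms)+
  have 2: "isCont (\<lambda>r. Gam w m (F r) (lap w m (F r)) y) r0"
    by (rule Gam_cont, rule assms, rule lap_cont, rule assms)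
  show ?thesis unfolding Gam2_def using 1 2 by (intro continuous_intros) auto
qed

lemma Gam2_heat_cont:
  "isCont (\<lambda>r. Gam2 w m (heat w m r f) (heat w m r f) y - K * Gam w m (heat w m r f) (heat w m r f) y) r0"
proof -
  have h: "\<And>z. isCont (\<lambda>r. heat w m r f z) r0" by (rule heat_isCont)
  have 1: "isCont (\<lambda>r. Gam2 w m (heat w m r f) (heat w m r f) y) r0" by (rule Gam2_cont[OF h])
  have 2: "isCont (\<lambda>r. Gam w m (heat w m r f) (heat w m r f) y) r0" by (rule Gam_cont[OF h h])
  show ?thesis by (intro continuous_intros 1 2)
qed

lemma deriv_right_unique:
  fixes f g :: "real \<Rightarrow> real"
  assumes f: "(f has_field_derivative a) (at 0)" and g: "(g has_field_derivative b) (at 0)"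
    and eq: "\<And>t. t \<ge> 0 \<Longrightarrow> f t = g t"
  shows "a = b"
proof -
  have "((\<lambda>t. f t - g t) has_field_derivative a - b) (at 0)" by (rule DERIV_diff[OF f g])
  then have "((\<lambda>y. ((f y - g y) - (f 0 - g 0)) / (y - 0)) \<longlongrightarrow> a - b) (at 0)"
    by (simp add: has_field_derivative_iff)
  then have l: "((\<lambda>y. ((f y - g y) - (f 0 - g 0)) / (y - 0)) \<longlongrightarrow> a - b) (at_right 0)"
    by (rule tendsto_mono[OF at_le, rotated]) simp
  have "\<forall>\<^sub>F y in at_right (0::real). ((f y - g y) - (f 0 - g 0)) / (y - 0) = 0"
    using eventually_at_right_less[of "0::real"] by eventually_elim (simp add: eq)
  then have "((\<lambda>y. ((f y - g y) - (f 0 - g 0)) / (y - 0)) \<longlongrightarrow> 0) (at_right 0)"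
    by (rule tendsto_eventually)
  from tendsto_unique[OF trivial_limit_at_right_real l this] show ?thesis by simp
qed

definition HH :: "real \<Rightarrow> real \<Rightarrow> ('a \<Rightarrow> real) \<Rightarrow> real \<Rightarrow> 'a \<Rightarrow> real" where
  "HH K t f s x = exp (- 2 * K * s) * heat w m s (Gam w m (heat w m (t - s) f) (heat w m (t - s) f)) x"

lemma HH_deriv: "((\<lambda>s. HH K t f s x) has_field_derivative
     exp (- 2 * K * s0) * heat w m s0 (\<lambda>y. 2 * (Gam2 w m (heat w m (t - s0) f) (heat w m (t - s0) f) y
        - K * Gam w m (heat w m (t - s0) f) (heat w m (t - s0) f) y)) x) (at s0)"
  unfolding HH_def by (rule grad_deriv)

lemma HH_mono:
  assumes cd: "CD_inf w m K" and ab: "0 \<le> a" "a \<le> b"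
  shows "HH K t f a x \<le> HH K t f b x"
proof (rule DERIV_nonneg_imp_nondecreasing[OF ab(2)])
  fix s assume s: "a \<le> s" "s \<le> b"
  define u where "u = heat w m (t - s) f"
  have nn: "0 \<le> 2 * (Gam2 w m u u y - K * Gam w m u u y)" for y
    using cd unfolding CD_inf_def by (simp add: mult_nonneg_nonneg)
  have "0 \<le> heat w m s (\<lambda>y. 2 * (Gam2 w m u u y - K * Gam w m u u y)) x"
    by (rule heat_nonneg) (use s ab nn in auto)
  then have pos: "0 \<le> exp (- 2 * K * s) * heat w m s (\<lambda>y. 2 * (Gam2 w m u u y - K * Gam w m u u y)) x"
    by simp
  have d: "((\<lambda>s. HH K t f s x) has_field_derivative exp (- 2 * K * s) * heat w m s (\<lambda>y. 2 * (Gam2 w m u u y - K * Gam w m u u y)) x) (at s)"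
    unfolding u_def by (rule HH_deriv)
  show "\<exists>y. ((\<lambda>s. HH K t f s x) has_real_derivative y) (at s) \<and> 0 \<le> y"
    using d pos by blast
qed

lemma HH_0: "HH K t f 0 x = Gam w m (heat w m t f) (heat w m t f) x"
  unfolding HH_def by (simp add: heat_0)

lemma HH_t: "HH K t f t x = exp (- 2 * K * t) * heat w m t (Gam w m f f) x"
proof -
  have "heat w m 0 f = f" by (rule ext) (rule heat_0)
  then show ?thesis unfolding HH_def by simp
qed

lemma grad_est:
  assumes cd: "CD_inf w m K" and t: "t \<ge> 0"
  shows "Gam w m (heat w m t f) (heat w m t f) x \<le> exp (- 2 * K * t) * heat w m t (Gam w m f f) x"
  using HH_mono[OF cd order_refl t, where t=t and f=f and x=x] unfolding HH_0 HH_t .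

end

context cg begin

lemma grad_rigid:
  assumes cd: "CD_inf w m K" and t: "t > 0"
    and eq: "Gam w m (heat w m t f) (heat w m t f) x = exp (- 2 * K * t) * heat w m t (Gam w m f f) x"
    and s: "0 < s" "s < t"
  shows "Gam2 w m (heat w m (t - s) f) (heat w m (t - s) f) y = K * Gam w m (heat w m (t - s) f) (heat w m (t - s) f) y"
proof -
  have e: "HH K t f 0 x = HH K t f t x" unfolding HH_0 HH_t by (rule eq)
  have c: "HH K t f r x = HH K t f 0 x" if r: "0 \<le> r" "r \<le> t" for r
  proof -
    have m1: "HH K t f 0 x \<le> HH K t f r x" by (rule HH_mono[OF cd order_refl r(1)])
    have m2: "HH K t f r x \<le> HH K t f t x" by (rule HH_mono[OF cd r])
    show ?thesis using m1 m2 e by linarith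
  qed
  have "exp (- 2 * K * s) * heat w m s (\<lambda>y. 2 * (Gam2 w m (heat w m (t - s) f) (heat w m (t - s) f) y
        - K * Gam w m (heat w m (t - s) f) (heat w m (t - s) f) y)) x = 0"
  proof (rule DERIV_local_const[OF HH_deriv])
    show "0 < min s (t - s)" using s by simp
    show "\<forall>y. \<bar>s - y\<bar> < min s (t - s) \<longrightarrow> HH K t f s x = HH K t f y x"
    proof (intro allI impI)
      fix y assume "\<bar>s - y\<bar> < min s (t - s)"
      then have "0 \<le> y" "y \<le> t" "0 \<le> s" "s \<le> t" using s by (auto simp: abs_less_iff)
      then show "HH K t f s x = HH K t f y x" using c by metis
    qed
  qed
  then have "heat w m s (\<lambda>y. 2 * (Gam2 w m (heat w m (t - s) f) (heat w m (t - s) f) y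
        - K * Gam w m (heat w m (t - s) f) (heat w m (t - s) f) y)) x = 0" by simp
  moreover define u where "u = heat w m (t - s) f"
  ultimately have z: "heat w m s (\<lambda>y. 2 * (Gam2 w m u u y - K * Gam w m u u y)) x = 0" by simp
  have nn: "0 \<le> 2 * (Gam2 w m u u z - K * Gam w m u u z)" for z
    using cd unfolding CD_inf_def by (simp add: mult_nonneg_nonneg)
  have "2 * (Gam2 w m u u y - K * Gam w m u u y) = 0"
    by (rule heat_zero_imp[where h="\<lambda>y. 2 * (Gam2 w m u u y - K * Gam w m u u y)", OF s(1) nn z])
  then show ?thesis unfolding u_def by simp
qed

end


lemma exp_decay_lim:
  fixes K C :: real assumes "K > 0" shows "((\<lambda>s. C * exp (- K * s)) \<longlongrightarrow> 0) at_top"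
proof -
  have "filterlim (\<lambda>s. K * s) at_top at_top"
    using assms by (intro filterlim_tendsto_pos_mult_at_top[OF tendsto_const] filterlim_ident) auto
  then have "filterlim (\<lambda>s. - (K * s)) at_bot at_top" by (simp add: filterlim_uminus_at_bot)
  then have "((\<lambda>s. exp (- (K * s))) \<longlongrightarrow> 0) at_top" by (rule filterlim_compose[OF exp_at_bot])
  then show ?thesis using tendsto_mult_right_zero[of _ at_top C] by simp
qed

lemma cont_right_zero:
  fixes g :: "real \<Rightarrow> real"
  assumes c: "isCont g 0" and z: "\<And>r. r > 0 \<Longrightarrow> g r = 0"
  shows "g 0 = 0"
proof -
  have "(g \<longlongrightarrow> g 0) (at 0)" using c by (simp add: isCont_def)
  then have l: "(g \<longlongrightarrow> g 0) (at_right 0)" by (rule tendsto_mono[OF at_le, rotated]) simp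
  have "\<forall>\<^sub>F y in at_right (0::real). g y = 0"
    using eventually_at_right_less[of "0::real"] by eventually_elim (simp add: z)
  then have "(g \<longlongrightarrow> 0) (at_right 0)" by (rule tendsto_eventually)
  from tendsto_unique[OF trivial_limit_at_right_real l this] show ?thesis by simp
qed

lemma exp_sq: fixes K t :: real shows "exp (- 2 * K * t) = (exp (- K * t))^2"
proof -
  have "- 2 * K * t = - K * t + - K * t" by simp
  then show ?thesis by (simp only: exp_add power2_eq_square)
qed

context wg begin

lemma heat_0_fun: "heat w m 0 f = f" by (rule ext) (rule heat_0)

lemma S2_imp_Gam2:
  assumes eq: "\<forall>t\<ge>0. \<forall>x. Gam w m (heat w m t f) (heat w m t f) x = exp (- 2 * K * t) * heat w m t (Gam w m f f) x"
  shows "Gam2 w m f f x = K * Gam w m f f x"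
proof -
  have dL: "((\<lambda>t. Gam w m (heat w m t f) (heat w m t f) x) has_field_derivative 2 * Gam w m (heat w m 0 f) (heat w m 0 (lap w m f)) x) (at 0)"
    by (rule Gam_deriv) (rule heat_deriv)
  have de: "((\<lambda>s. exp (- 2 * K * s)) has_field_derivative (- 2 * K) * exp (- 2 * K * 0)) (at 0)"
    by (rule derivative_eq_intros refl | simp)+
  have dR: "((\<lambda>t. exp (- 2 * K * t) * heat w m t (Gam w m f f) x) has_field_derivative
      (- 2 * K) * exp (- 2 * K * 0) * heat w m 0 (Gam w m f f) x + heat w m 0 (lap w m (Gam w m f f)) x * exp (- 2 * K * 0)) (at 0)"
    by (rule DERIV_mult[OF de heat_deriv])
  have "2 * Gam w m (heat w m 0 f) (heat w m 0 (lap w m f)) x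
     = (- 2 * K) * exp (- 2 * K * 0) * heat w m 0 (Gam w m f f) x + heat w m 0 (lap w m (Gam w m f f)) x * exp (- 2 * K * 0)"
    by (rule deriv_right_unique[OF dL dR]) (use eq in auto)
  then have "2 * Gam w m f (lap w m f) x = - 2 * K * Gam w m f f x + lap w m (Gam w m f f) x"
    by (simp add: heat_0_fun heat_0)
  then show ?thesis unfolding Gam2_def by simp
qed

lemma D0_case:
  assumes D0: "Deg_max w m = 0"
  shows "Gam2 w m f f x = K * Gam w m f f x"
proof -
  have w0: "w x y = 0" for x y
  proof -
    have "Deg w m x = 0" using Deg_le[of x] Deg_nn[of x] D0 by simp
    then have "(\<Sum>y\<in>UNIV. w x y) = 0" using m_pos[of x] by (simp add: Deg_alt)
    then show ?thesis using sum_nonneg_eq_0_iff[of UNIV "w x"] w_nn by simp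
  qed
  have "Gam w m g h = (\<lambda>x. 0)" for g h by (rule ext) (simp add: Gam_alt w0)
  moreover have "lap w m g x = 0" for g x by (simp add: lap_alt w0)
  ultimately show ?thesis unfolding Gam2_def by simp
qed

end

context cgx begin

lemma S5_imp_S2:
  assumes K: "K > 0" and h: "HSS w m (2 * Deg_max w m / K) (K / 2) x0"
  shows "Deg w m x0 = Deg_max w m \<and> (\<forall>t\<ge>0. \<forall>x. Gam w m (heat w m t f0) (heat w m t f0) x
                          = exp (- 2 * K * t) * heat w m t (Gam w m f0 f0) x)"
proof -
  note F = s5_facts[OF K h]
  define D where "D = Deg_max w m"
  define \<phi> where "\<phi> z = f0 z + (- (D / K))" for z
  have lp: "lap w m \<phi> z = (- K) * \<phi> z" for z
    unfolding \<phi>_def[abs_def] lap_add_const using F(3) K by (simp add: D_def algebra_simps)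
  have f0e: "f0 = (\<lambda>z. \<phi> z + D / K)" by (simp add: \<phi>_def)
  have ht: "heat w m t f0 = (\<lambda>z. exp (- K * t) * \<phi> z + D / K)" for t
  proof (rule ext)
    fix z
    have "heat w m t f0 z = heat w m t \<phi> z + D / K" unfolding f0e by (rule heat_add_const)
    also have "\<dots> = exp (- K * t) * \<phi> z + D / K" using heat_eigen[of \<phi> "- K" t z] lp by simp
    finally show "heat w m t f0 z = exp (- K * t) * \<phi> z + D / K" .
  qed
  have gphi: "Gam w m \<phi> \<phi> x = Gam w m f0 f0 x" for x
    unfolding \<phi>_def[abs_def] by (rule trans[OF Gam_add_const], rule trans[OF Gam_sym], rule Gam_add_const)
  have "Gam w m (heat w m t f0) (heat w m t f0) x = exp (- 2 * K * t) * heat w m t (Gam w m f0 f0) x" for t x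
  proof -
    have "Gam w m (heat w m t f0) (heat w m t f0) x = (exp (- K * t))^2 * Gam w m \<phi> \<phi> x"
    proof -
      define a where "a = exp (- K * t)"
      have "Gam w m (\<lambda>z. a * \<phi> z + D / K) (\<lambda>z. a * \<phi> z + D / K) x = Gam w m (\<lambda>z. a * \<phi> z) (\<lambda>z. a * \<phi> z + D / K) x"
        by (rule Gam_add_const)
      also have "\<dots> = a * Gam w m \<phi> (\<lambda>z. a * \<phi> z + D / K) x" by (rule Gam_cmult)
      also have "Gam w m \<phi> (\<lambda>z. a * \<phi> z + D / K) x = Gam w m (\<lambda>z. a * \<phi> z + D / K) \<phi> x" by (rule Gam_sym)
      also have "\<dots> = Gam w m (\<lambda>z. a * \<phi> z) \<phi> x" by (rule Gam_add_const)
      also have "\<dots> = a * Gam w m \<phi> \<phi> x" by (rule Gam_cmult)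
      finally show ?thesis unfolding ht a_def[symmetric] by (simp add: power2_eq_square)
    qed
    moreover have "heat w m t (Gam w m f0 f0) x = Gam w m f0 f0 x"
    proof -
      have ge: "Gam w m f0 f0 = (\<lambda>z. Deg_max w m / 2)" using F(4) by auto
      show ?thesis unfolding ge heat_const ..
    qed
    ultimately show ?thesis using gphi exp_sq[of K t] by simp
  qed
  then show ?thesis using F(1) by simp
qed

lemma S1_imp_S3:
  assumes K: "K > 0" and cd: "CD_inf w m K"
    and y0: "f0 y0 = 2 * Deg_max w m / K"
  shows "Deg w m x0 = Deg_max w m \<and> (\<forall>x. Gam2 w m f0 f0 x = K * Gam w m f0 f0 x)"
proof (cases "Deg_max w m = 0")
  case True
  then show ?thesis using D0_case[OF True] Deg_le[of x0] Deg_nn[of x0] by simp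
next
  case False
  define D where "D = Deg_max w m"
  have Dpos: "D > 0" using False Dmax_nn by (simp add: D_def)
  define P where "P t = heat w m t f0" for t
  have PG: "heat w m t (Gam w m f0 f0) y \<le> D / 2" if "t \<ge> 0" for t y
    using heat_le_const[OF that Gam_f0_le_D] by (simp add: D_def)
  have GP: "Gam w m (P t) (P t) y \<le> exp (- 2 * K * t) * (D / 2)" if t: "t \<ge> 0" for t y
    using grad_est[OF cd t, of f0 y] PG[OF t, of y] unfolding P_def
    by (meson exp_gt_zero less_imp_le mult_left_mono order_trans)
  have LB: "\<bar>lap w m (P t) y\<bar> \<le> D * exp (- K * t)" if t: "t \<ge> 0" for t y
  proof -
    have "(lap w m (P t) y)^2 \<le> 2 * Deg w m y * Gam w m (P t) (P t) y" by (rule lap_CS)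
    also have "\<dots> \<le> 2 * D * Gam w m (P t) (P t) y"
      using Deg_le[of y] Gam_nn[of "P t" y] by (simp add: D_def mult_right_mono)
    also have "\<dots> \<le> 2 * D * (exp (- 2 * K * t) * (D / 2))"
      using GP[OF t, of y] Dpos by (simp add: mult_left_mono)
    also have "\<dots> = (D * exp (- K * t))^2" unfolding exp_sq by (simp add: power2_eq_square)
    finally have "(\<bar>lap w m (P t) y\<bar>)^2 \<le> (D * exp (- K * t))^2" by simp
    then show ?thesis by (rule power2_le_imp_le) (use Dpos in simp)
  qed
  have edge: "\<bar>P t y - P t z\<bar> \<le> sqrt (m z * D / w z y) * exp (- K * t)" if a: "adj w z y" and t: "t \<ge> 0" for t z y
  proof -
    have wp: "w z y > 0" using a unfolding adj_def .
    have "w z y * (P t y - P t z)^2 \<le> (\<Sum>u\<in>UNIV. w z u * (P t u - P t z) * (P t u - P t z))"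
      using member_le_sum[of y UNIV "\<lambda>u. w z u * (P t u - P t z) * (P t u - P t z)"] w_nn
      by (simp add: power2_eq_square mult.assoc)
    also have "\<dots> = 2 * m z * Gam w m (P t) (P t) z" using m_pos[of z] by (simp add: Gam_alt)
    also have "\<dots> \<le> 2 * m z * (exp (- 2 * K * t) * (D / 2))"
      using GP[OF t, of z] m_pos[of z] by (simp add: mult_left_mono)
    finally have "w z y * (P t y - P t z)^2 \<le> 2 * m z * (exp (- 2 * K * t) * (D / 2))" .
    then have "w z y * (P t y - P t z)^2 \<le> m z * D * (exp (- K * t))^2" unfolding exp_sq by (simp add: algebra_simps)
    then have "(P t y - P t z)^2 \<le> (m z * D / w z y) * (exp (- K * t))^2"
      using wp by (simp add: field_simps)
    also have "\<dots> = (sqrt (m z * D / w z y) * exp (- K * t))^2"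
      using m_pos[of z] Dpos wp by (simp add: power_mult_distrib)
    finally have "(\<bar>P t y - P t z\<bar>)^2 \<le> (sqrt (m z * D / w z y) * exp (- K * t))^2" by simp
    then show ?thesis by (rule power2_le_imp_le) (use m_pos[of z] Dpos wp in simp)
  qed
  have DC: "\<exists>C. \<forall>t\<ge>0. \<bar>P t y - P t x0\<bar> \<le> C * exp (- K * t)" if "(adj w ^^ n) x0 y" for n y
    using that
  proof (induction n arbitrary: y)
    case 0 then show ?case by (intro exI[of _ 0]) simp
  next
    case (Suc n)
    from Suc.prems obtain z where z: "(adj w ^^ n) x0 z" "adj w z y" by (rule relpowp_Suc_E)
    obtain C where C: "\<forall>t\<ge>0. \<bar>P t z - P t x0\<bar> \<le> C * exp (- K * t)" using Suc.IH[OF z(1)] by blast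
    show ?case
    proof (intro exI[of _ "C + sqrt (m z * D / w z y)"] allI impI)
      fix t :: real assume t: "t \<ge> 0"
      have "\<bar>P t y - P t x0\<bar> \<le> \<bar>P t y - P t z\<bar> + \<bar>P t z - P t x0\<bar>" by simp
      also have "\<dots> \<le> sqrt (m z * D / w z y) * exp (- K * t) + C * exp (- K * t)"
        using edge[OF z(2) t] C t by (intro add_mono) auto
      finally show "\<bar>P t y - P t x0\<bar> \<le> (C + sqrt (m z * D / w z y)) * exp (- K * t)"
        by (simp add: algebra_simps)
    qed
  qed
  obtain C where C: "\<forall>t\<ge>0. \<bar>P t y0 - P t x0\<bar> \<le> C * exp (- K * t)"
    using DC[OF gdist_path[of x0 y0]] by blast
  define v where "v t = P t y0 - P t x0 - 2 * D * exp (- K * t) / K" for t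
  have dv: "(v has_field_derivative lap w m (P t) y0 - lap w m (P t) x0 + 2 * D * exp (- K * t)) (at t)" for t
  proof -
    have d1: "((\<lambda>t. P t y0) has_field_derivative lap w m (P t) y0) (at t)"
      unfolding P_def heat_lap[symmetric] by (rule heat_deriv)
    have d2: "((\<lambda>t. P t x0) has_field_derivative lap w m (P t) x0) (at t)"
      unfolding P_def heat_lap[symmetric] by (rule heat_deriv)
    have d3: "((\<lambda>t. 2 * D * exp (- K * t) / K) has_field_derivative - 2 * D * exp (- K * t)) (at t)"
      using K by (auto intro!: derivative_eq_intros simp: field_simps)
    show ?thesis unfolding v_def[abs_def] using DERIV_diff[OF DERIV_diff[OF d1 d2] d3] by simp
  qed
  have vmono: "v a \<le> v b" if "0 \<le> a" "a \<le> b" for a b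
  proof (rule DERIV_nonneg_imp_nondecreasing[OF that(2)])
    fix s assume s: "a \<le> s" "s \<le> b"
    then have "0 \<le> s" using that by simp
    then have "0 \<le> lap w m (P s) y0 - lap w m (P s) x0 + 2 * D * exp (- K * s)"
      using LB[of s y0] LB[of s x0] by (simp add: abs_le_iff)
    then show "\<exists>y. (v has_real_derivative y) (at s) \<and> 0 \<le> y" using dv by blast
  qed
  have v0: "v 0 = 0" unfolding v_def P_def heat_0_fun using y0 f0_x0 K by (simp add: D_def)
  have vz: "v T = 0" if T: "T \<ge> 0" for T
  proof (rule ccontr)
    assume "v T \<noteq> 0"
    then have vp: "v T > 0" using vmono[OF order_refl T] v0 by simp
    have "\<forall>\<^sub>F s in at_top. C * exp (- K * s) < v T"
      by (rule order_tendstoD(2)[OF exp_decay_lim[OF K] vp])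
    moreover have "\<forall>\<^sub>F s in at_top. T \<le> s" by (rule eventually_ge_at_top)
    ultimately have "\<forall>\<^sub>F s in at_top. C * exp (- K * s) < v T \<and> T \<le> s" by (rule eventually_conj)
    then obtain N where N: "\<forall>s\<ge>N. C * exp (- K * s) < v T \<and> T \<le> s" unfolding eventually_at_top_linorder by blast
    then have N1: "C * exp (- K * N) < v T" "T \<le> N" by auto
    have "v T \<le> v N" using vmono[OF T N1(2)] .
    also have "\<dots> \<le> P N y0 - P N x0" unfolding v_def using Dpos K by simp
    also have "\<dots> \<le> C * exp (- K * N)"
    proof -
      have "0 \<le> N" using T N1(2) by simp
      then have "\<bar>P N y0 - P N x0\<bar> \<le> C * exp (- K * N)" using C by blast
      then show ?thesis by simp
    qed
    finally show False using N1(1) by simp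
  qed
  have lx0: "lap w m (P t) x0 = D * exp (- K * t)" if t: "t > 0" for t
  proof -
    have "lap w m (P t) y0 - lap w m (P t) x0 + 2 * D * exp (- K * t) = 0"
    proof (rule DERIV_local_const[OF dv t])
      show "\<forall>y. \<bar>t - y\<bar> < t \<longrightarrow> v t = v y" using vz t by (auto simp: abs_less_iff)
    qed
    then show ?thesis using LB[of t y0] LB[of t x0] t by (simp add: abs_le_iff)
  qed
  have key: "Gam w m (P t) (P t) x0 = exp (- 2 * K * t) * heat w m t (Gam w m f0 f0) x0 \<and> Deg w m x0 = D" if t: "t > 0" for t
  proof -
    define e where "e = exp (- K * t)"
    have ep: "e > 0" unfolding e_def by simp
    have c1: "(D * e)^2 \<le> 2 * Deg w m x0 * Gam w m (P t) (P t) x0"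
      using lap_CS[of "P t" x0] lx0[OF t] by (simp add: e_def)
    have c2: "2 * Deg w m x0 * Gam w m (P t) (P t) x0 \<le> 2 * D * Gam w m (P t) (P t) x0"
      using Deg_le[of x0] Gam_nn[of "P t" x0] by (simp add: D_def mult_right_mono)
    have c3: "Gam w m (P t) (P t) x0 \<le> e^2 * heat w m t (Gam w m f0 f0) x0"
      using grad_est[OF cd, of t f0 x0] t unfolding P_def e_def exp_sq by simp
    have c4: "heat w m t (Gam w m f0 f0) x0 \<le> D / 2" using PG t by simp
    have g1: "Gam w m (P t) (P t) x0 = e^2 * heat w m t (Gam w m f0 f0) x0"
    proof -
      have "D^2 * e^2 \<le> 2 * D * (e^2 * heat w m t (Gam w m f0 f0) x0)"
        using c1 c2 c3 Dpos by (smt (verit) mult_left_mono power_mult_distrib)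
      then have "D * e^2 \<le> 2 * e^2 * heat w m t (Gam w m f0 f0) x0" using Dpos by (simp add: power2_eq_square algebra_simps)
      then have "D / 2 \<le> heat w m t (Gam w m f0 f0) x0" using ep by (simp add: field_simps power2_eq_square)
      then have hx: "heat w m t (Gam w m f0 f0) x0 = D / 2" using c4 by simp
      have "D^2 * e^2 \<le> 2 * D * Gam w m (P t) (P t) x0" using c1 c2 by (simp add: power_mult_distrib)
      then have "D * e^2 / 2 \<le> Gam w m (P t) (P t) x0" using Dpos by (simp add: power2_eq_square field_simps)
      then have gx: "Gam w m (P t) (P t) x0 = D * e^2 / 2" using c3 hx by (simp add: algebra_simps)
      show ?thesis unfolding gx hx by simp
    qed
    have a1: "Gam w m (P t) (P t) x0 \<le> e^2 * (D / 2)"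
      unfolding g1 by (rule mult_left_mono[OF c4]) simp
    have a2: "2 * Deg w m x0 * Gam w m (P t) (P t) x0 \<le> 2 * Deg w m x0 * (e^2 * (D / 2))"
      by (rule mult_left_mono[OF a1]) (simp add: Deg_nn)
    have "D * (D * e^2) \<le> Deg w m x0 * (D * e^2)"
    proof -
      have q1: "D * (D * e^2) = (D * e)^2" by (simp add: power2_eq_square)
      have q2: "Deg w m x0 * (D * e^2) = 2 * Deg w m x0 * (e^2 * (D / 2))" by simp
      show ?thesis unfolding q1 q2 using c1 a2 by linarith
    qed
    then have "D \<le> Deg w m x0" using Dpos ep by (simp add: mult_le_cancel_right_pos)
    moreover have "Deg w m x0 \<le> D" using Deg_le by (simp add: D_def)
    ultimately have "Deg w m x0 = D" by simp
    then show ?thesis using g1 unfolding e_def exp_sq by simp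
  qed
  have r: "Gam2 w m (P r) (P r) y - K * Gam w m (P r) (P r) y = 0" if r: "r > 0" for r y
  proof -
    have "Gam2 w m (heat w m (2 * r - r) f0) (heat w m (2 * r - r) f0) y = K * Gam w m (heat w m (2 * r - r) f0) (heat w m (2 * r - r) f0) y"
      using key[of "2 * r"] r by (intro grad_rigid[OF cd, of "2 * r" f0 x0]) (auto simp: P_def)
    then show ?thesis by (simp add: P_def)
  qed
  have "Gam2 w m f0 f0 y - K * Gam w m f0 f0 y = 0" for y
    using cont_right_zero[OF Gam2_heat_cont[of 0 f0 y K]] r unfolding P_def by (simp add: heat_0_fun)
  then show ?thesis using key[of 1] by (simp add: D_def)
qed

end


theorem theorem4:
  fixes w :: "'a::finite \<Rightarrow> 'a \<Rightarrow> real" and m :: "'a \<Rightarrow> real"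
    and K :: real and x0 :: 'a
  assumes "weighted_graph w m" and "connected_graph w"
    and "K > 0" and "CD_inf w m K"
  defines "D \<equiv> Deg_max w m"
    and "f0 \<equiv> (\<lambda>x. real (gdist w x0 x))"
  shows "((\<exists>y0. real (gdist w x0 y0) = 2 * D / K)
          \<longleftrightarrow> (Deg w m x0 = D \<and>
               (\<forall>t\<ge>0. \<forall>x. Gam w m (heat w m t f0) (heat w m t f0) x
                          = exp (- 2 * K * t) * heat w m t (Gam w m f0 f0) x)))
       \<and> ((Deg w m x0 = D \<and>
               (\<forall>t\<ge>0. \<forall>x. Gam w m (heat w m t f0) (heat w m t f0) x
                          = exp (- 2 * K * t) * heat w m t (Gam w m f0 f0) x))
          \<longleftrightarrow> (Deg w m x0 = D \<and> (\<forall>x. Gam2 w m f0 f0 x = K * Gam w m f0 f0 x)))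
       \<and> ((Deg w m x0 = D \<and> (\<forall>x. Gam2 w m f0 f0 x = K * Gam w m f0 f0 x))
          \<longleftrightarrow> (Deg w m x0 = D \<and>
               (\<exists>\<phi> C. (\<forall>x. f0 x = \<phi> x + C) \<and> (\<forall>x. - lap w m \<phi> x = K * \<phi> x))))
       \<and> ((Deg w m x0 = D \<and>
               (\<exists>\<phi> C. (\<forall>x. f0 x = \<phi> x + C) \<and> (\<forall>x. - lap w m \<phi> x = K * \<phi> x)))
          \<longleftrightarrow> HSS w m (2 * D / K) (K / 2) x0)"
proof -
  interpret cgx w m x0
    by unfold_locales (use assms(1,2) in auto)
  have K: "K > 0" and cd: "CD_inf w m K" using assms(3,4) by auto
  define S1 where "S1 \<longleftrightarrow> (\<exists>y0. real (gdist w x0 y0) = 2 * D / K)"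
  define S2 where "S2 \<longleftrightarrow> (Deg w m x0 = D \<and>
               (\<forall>t\<ge>0. \<forall>x. Gam w m (heat w m t f0) (heat w m t f0) x
                          = exp (- 2 * K * t) * heat w m t (Gam w m f0 f0) x))"
  define S3 where "S3 \<longleftrightarrow> (Deg w m x0 = D \<and> (\<forall>x. Gam2 w m f0 f0 x = K * Gam w m f0 f0 x))"
  define S4 where "S4 \<longleftrightarrow> (Deg w m x0 = D \<and>
               (\<exists>\<phi> C. (\<forall>x. f0 x = \<phi> x + C) \<and> (\<forall>x. - lap w m \<phi> x = K * \<phi> x)))"
  define S5 where "S5 \<longleftrightarrow> HSS w m (2 * D / K) (K / 2) x0"
  have 51: "S5 \<Longrightarrow> S1" unfolding S5_def S1_def D_def using s5_imp_s1[OF K] by blast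
  have 52: "S5 \<Longrightarrow> S2" unfolding S5_def S2_def D_def f0_def using S5_imp_S2[OF K] by blast
  have 53: "S5 \<Longrightarrow> S3" unfolding S5_def S3_def D_def f0_def using s5_imp_s3[OF K] by blast
  have 54: "S5 \<Longrightarrow> S4" unfolding S5_def S4_def D_def f0_def using s5_imp_s4[OF K] by blast
  have 13: "S1 \<Longrightarrow> S3" unfolding S1_def S3_def D_def f0_def using S1_imp_S3[OF K cd] by blast
  have 23: "S2 \<Longrightarrow> S3" unfolding S2_def S3_def D_def f0_def using S2_imp_Gam2 by blast
  have 34: "S3 \<Longrightarrow> S4" unfolding S3_def S4_def D_def f0_def using s3_imp_s4[OF K cd] by blast
  have 45: "S4 \<Longrightarrow> S5" unfolding S4_def S5_def D_def f0_def using s4_imp_s5[OF K cd] by blast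
  have "(S1 \<longleftrightarrow> S2) \<and> (S2 \<longleftrightarrow> S3) \<and> (S3 \<longleftrightarrow> S4) \<and> (S4 \<longleftrightarrow> S5)"
    using 51 52 53 54 13 23 34 45 by blast
  then show ?thesis unfolding S1_def S2_def S3_def S4_def S5_def .
qed


end
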